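(* Let $E$ be a finite-dimensional complex Hilbert space, $e\in E$ a unit vector, $\tau\in(0,1)$, $\rho:=1-\tau$, and let $T_0\in B(E)_+$ be strictly positive. Define $$T_{n+1}:=T_n^{1/2}\bigl(I_E-\tau|e\rangle\langle e|\bigr)T_n^{1/2}\qquad(n\ge0).$$ Then each $T_n$ is strictly positive and $$T_{n+1}^{-1}=T_n^{-1}+\frac{\tau}{\rho}\,|T_n^{-1/2}e\rangle\langle T_n^{-1/2}e|.$$ Setting $\beta_n:=\langle e,T_n^{-1}e\rangle$ and $s_n:=\mathrm{tr}(T_n^{-1})$, one has $$\beta_{n+1}-\beta_n=\frac{\tau}{\rho}|\langle e,T_n^{-1/2}e\rangle|^2,\qquad s_{n+1}-s_n=\frac{\tau}{\rho}\beta_n.$$ In particular, for all $n\ge0$, $$\beta_n\ge\beta_0+n\frac{\tau}{\rho\|T_0\|},\qquad s_n\ge s_0+\frac{\tau}{\rho}n\beta_0+\frac{\tau^2}{2\rho^2\|T_0\|}n(n-1).$$ Consequently there is a constant $C>0$ depending only on $T_0$ and $\tau$ such that $$\lambda_{\min}(T_n)\le\frac{\dim E}{s_n}\le\frac{C}{n^2}\qquad(n\ge1).$$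
   Context: For vectors $x,y$, $|x\rangle\langle y|$ denotes the operator $z\mapsto\langle y,z\rangle x$. $B(E)_+$ denotes positive operators; $T^{1/2}$, $T^{-1/2}$ are the positive square root and its inverse. $\lambda_{\min}(T)$ is the smallest eigenvalue of $T$. *)

theory Defs
  imports "Jordan_Normal_Form.Matrix" "Jordan_Normal_Form.Char_Poly" "HOL.Complex"
begin

text \<open>The finite-dimensional complex Hilbert space E is modelled as C^d
  (complex vectors of dimension d) with the standard inner product, which is
  antilinear in the first and linear in the second argument; operators on E are
  d x d complex matrices.\<close>

definition cinner :: "complex vec \<Rightarrow> complex vec \<Rightarrow> complex" where
  "cinner x y = (\<Sum>i<dim_vec y. cnj (x $ i) * y $ i)"

definition vnorm :: "complex vec \<Rightarrow> real" where
  "vnorm x = sqrt (\<Sum>i<dim_vec x. (cmod (x $ i))\<^sup>2)"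

definition adj :: "complex mat \<Rightarrow> complex mat" where
  "adj A = mat (dim_col A) (dim_row A) (\<lambda>(i,j). cnj (A $$ (j,i)))"

definition positive_op :: "nat \<Rightarrow> complex mat \<Rightarrow> bool" where
  "positive_op d A \<longleftrightarrow> A \<in> carrier_mat d d \<and> adj A = A \<and>
     (\<forall>x \<in> carrier_vec d. 0 \<le> Re (cinner x (A *\<^sub>v x)))"

text \<open>Strictly positive operators (positive and invertible; in finite
  dimension: positive definite).\<close>
definition strictly_positive :: "nat \<Rightarrow> complex mat \<Rightarrow> bool" where
  "strictly_positive d A \<longleftrightarrow> A \<in> carrier_mat d d \<and> adj A = A \<and>
     (\<forall>x \<in> carrier_vec d. x \<noteq> 0\<^sub>v d \<longrightarrow> 0 < Re (cinner x (A *\<^sub>v x)))"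

definition msqrt :: "complex mat \<Rightarrow> complex mat" where
  "msqrt A = (THE S. positive_op (dim_row A) S \<and> S * S = A)"

definition minv :: "complex mat \<Rightarrow> complex mat" where
  "minv A = (THE B. B \<in> carrier_mat (dim_row A) (dim_row A) \<and>
                     A * B = 1\<^sub>m (dim_row A) \<and> B * A = 1\<^sub>m (dim_row A))"

definition minvsqrt :: "complex mat \<Rightarrow> complex mat" where
  "minvsqrt A = msqrt (minv A)"

definition ketbra :: "complex vec \<Rightarrow> complex vec \<Rightarrow> complex mat" where
  "ketbra x y = mat (dim_vec x) (dim_vec y) (\<lambda>(i,j). x $ i * cnj (y $ j))"

definition mtrace :: "complex mat \<Rightarrow> complex" where
  "mtrace A = (\<Sum>i<dim_row A. A $$ (i,i))"

definition opnorm :: "complex mat \<Rightarrow> real" where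
  "opnorm A = Sup {vnorm (A *\<^sub>v x) | x. x \<in> carrier_vec (dim_col A) \<and> vnorm x = 1}"

text \<open>Smallest eigenvalue (for self-adjoint operators, whose eigenvalues are real).\<close>
definition lambda_min :: "complex mat \<Rightarrow> real" where
  "lambda_min A = Min {r :: real. eigenvalue A (complex_of_real r)}"

primrec Tseq :: "real \<Rightarrow> complex vec \<Rightarrow> complex mat \<Rightarrow> nat \<Rightarrow> complex mat" where
  "Tseq \<tau> e T0 0 = T0"
| "Tseq \<tau> e T0 (Suc k) =
     msqrt (Tseq \<tau> e T0 k) *
       (1\<^sub>m (dim_vec e) - complex_of_real \<tau> \<cdot>\<^sub>m ketbra e e) *
     msqrt (Tseq \<tau> e T0 k)"

end

theory Submission
  imports Defs
begin


lemma adj_carrier[simp]: "adj A \<in> carrier_mat (dim_col A) (dim_row A)"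
  by (simp add: adj_def)
lemma dim_adj[simp]: "dim_row (adj A) = dim_col A" "dim_col (adj A) = dim_row A"
  by (simp_all add: adj_def)
lemma index_adj[simp]: "i < dim_col A \<Longrightarrow> j < dim_row A \<Longrightarrow> adj A $$ (i,j) = cnj (A $$ (j,i))"
  by (simp add: adj_def)
lemma adj_adj[simp]: "adj (adj A) = A"
  by (rule eq_matI) auto
lemma adj_mult: assumes "A \<in> carrier_mat n m" "B \<in> carrier_mat m k"
  shows "adj (A * B) = adj B * adj A"
  using assms by (intro eq_matI) (auto simp: scalar_prod_def cnj_sum mult.commute)
lemma adj_one[simp]: "adj (1\<^sub>m n) = 1\<^sub>m n"
  by (rule eq_matI) auto
lemma adj_add: assumes "A \<in> carrier_mat n m" "B \<in> carrier_mat n m"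
  shows "adj (A + B) = adj A + adj B"
  using assms by (intro eq_matI) auto
lemma adj_minus: assumes "A \<in> carrier_mat n m" "B \<in> carrier_mat n m"
  shows "adj (A - B) = adj A - adj B"
  using assms by (intro eq_matI) auto
lemma adj_smult: "adj (c \<cdot>\<^sub>m A) = cnj c \<cdot>\<^sub>m adj A"
  by (intro eq_matI) auto

lemma cinner_adj: assumes "A \<in> carrier_mat n m" "x \<in> carrier_vec n" "y \<in> carrier_vec m"
  shows "cinner x (A *\<^sub>v y) = cinner (adj A *\<^sub>v x) y"
proof -
  have "cinner x (A *\<^sub>v y) = (\<Sum>i<n. \<Sum>j<m. cnj (x$i) * A$$(i,j) * y$j)"
    using assms by (simp add: cinner_def scalar_prod_def sum_distrib_left atLeast0LessThan mult.assoc)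
  also have "\<dots> = (\<Sum>j<m. \<Sum>i<n. cnj (x$i) * A$$(i,j) * y$j)" by (rule sum.swap)
  also have "\<dots> = (\<Sum>j<m. (\<Sum>i<n. cnj (x$i) * A$$(i,j)) * y$j)"
    by (simp add: sum_distrib_right)
  also have "\<dots> = cinner (adj A *\<^sub>v x) y"
    using assms by (simp add: cinner_def scalar_prod_def atLeast0LessThan mult.commute)
  finally show ?thesis .
qed

lemma cinner_add_right: "dim_vec y = dim_vec z \<Longrightarrow> cinner x (y + z) = cinner x y + cinner x z"
  by (simp add: cinner_def algebra_simps sum.distrib)
lemma cinner_minus_right: "dim_vec y = dim_vec z \<Longrightarrow> cinner x (y - z) = cinner x y - cinner x z"
  by (simp add: cinner_def algebra_simps sum_subtractf)
lemma cinner_smult_right: "cinner x (c \<cdot>\<^sub>v y) = c * cinner x y"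
  by (simp add: cinner_def algebra_simps sum_distrib_left)
lemma cinner_add_left: "dim_vec x = dim_vec z \<Longrightarrow> dim_vec y = dim_vec z \<Longrightarrow> cinner (x + y) z = cinner x z + cinner y z"
  by (simp add: cinner_def algebra_simps sum.distrib)
lemma cinner_minus_left: "dim_vec x = dim_vec z \<Longrightarrow> dim_vec y = dim_vec z \<Longrightarrow> cinner (x - y) z = cinner x z - cinner y z"
  by (simp add: cinner_def algebra_simps sum_subtractf)
lemma cinner_smult_left: "dim_vec x = dim_vec z \<Longrightarrow> cinner (c \<cdot>\<^sub>v x) z = cnj c * cinner x z"
  by (simp add: cinner_def algebra_simps sum_distrib_left)
lemma cinner_commute: "dim_vec x = dim_vec y \<Longrightarrow> cinner y x = cnj (cinner x y)"
  by (simp add: cinner_def cnj_sum mult.commute)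

lemma cinner_self: "cinner x x = complex_of_real (\<Sum>i<dim_vec x. (cmod (x$i))\<^sup>2)"
  unfolding cinner_def of_real_sum
  by (intro sum.cong refl, subst complex_norm_square) (simp add: mult.commute)
lemma vnorm_sq: "(vnorm x)\<^sup>2 = (\<Sum>i<dim_vec x. (cmod (x$i))\<^sup>2)"
  by (simp add: vnorm_def sum_nonneg)
lemma cinner_self_vnorm: "cinner x x = complex_of_real ((vnorm x)\<^sup>2)"
  by (simp add: cinner_self vnorm_sq)
lemma cinner_self_eq_0: "cinner x x = 0 \<longleftrightarrow> x = 0\<^sub>v (dim_vec x)"
proof
  assume "cinner x x = 0"
  hence "(\<Sum>i<dim_vec x. (cmod (x$i))\<^sup>2) = 0" unfolding cinner_self of_real_eq_0_iff .
  hence "\<forall>i\<in>{..<dim_vec x}. (cmod (x$i))\<^sup>2 = 0" by (subst (asm) sum_nonneg_eq_0_iff) auto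
  thus "x = 0\<^sub>v (dim_vec x)" by (intro eq_vecI) auto
next
  assume h: "x = 0\<^sub>v (dim_vec x)"
  have "\<forall>i<dim_vec x. x $ i = 0" by (metis h index_zero_vec(1))
  thus "cinner x x = 0" by (simp add: cinner_def)
qed

lemma Re_cinner_self_ge0: "0 \<le> Re (cinner x x)"
  by (simp add: cinner_self sum_nonneg)

lemma cinner_zero_right[simp]: "cinner x (0\<^sub>v n) = 0" by (simp add: cinner_def)

lemma ketbra_carrier[simp]: "ketbra x y \<in> carrier_mat (dim_vec x) (dim_vec y)"
  by (simp add: ketbra_def)
lemma dim_ketbra[simp]: "dim_row (ketbra x y) = dim_vec x" "dim_col (ketbra x y) = dim_vec y"
  by (simp_all add: ketbra_def)
lemma index_ketbra[simp]: "i < dim_vec x \<Longrightarrow> j < dim_vec y \<Longrightarrow> ketbra x y $$ (i,j) = x$i * cnj (y$j)"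
  by (simp add: ketbra_def)
lemma ketbra_mult_vec: "dim_vec z = dim_vec y \<Longrightarrow> ketbra x y *\<^sub>v z = cinner y z \<cdot>\<^sub>v x"
  by (intro eq_vecI) (auto simp: cinner_def scalar_prod_def sum_distrib_left atLeast0LessThan mult.commute mult.left_commute)
lemma mult_ketbra: "A \<in> carrier_mat n (dim_vec x) \<Longrightarrow> A * ketbra x y = ketbra (A *\<^sub>v x) y"
  by (intro eq_matI) (auto simp: scalar_prod_def sum_distrib_right mult.assoc)
lemma ketbra_mult: "B \<in> carrier_mat (dim_vec y) k \<Longrightarrow> ketbra x y * B = ketbra x (adj B *\<^sub>v y)"
  by (intro eq_matI) (auto simp: scalar_prod_def sum_distrib_left cnj_sum mult.commute mult.left_commute)
lemma adj_ketbra: "adj (ketbra x y) = ketbra y x"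
  by (intro eq_matI) auto
lemma ketbra_ketbra: "dim_vec y = dim_vec z \<Longrightarrow> ketbra x y * ketbra z w = cinner y z \<cdot>\<^sub>m ketbra x w"
  by (intro eq_matI) (auto simp: scalar_prod_def cinner_def sum_distrib_left sum_distrib_right atLeast0LessThan mult.commute mult.left_commute)
lemma mtrace_ketbra: "dim_vec x = dim_vec y \<Longrightarrow> mtrace (ketbra x y) = cinner y x"
  by (simp add: mtrace_def cinner_def mult.commute)
lemma mtrace_add: "A \<in> carrier_mat n n \<Longrightarrow> B \<in> carrier_mat n n \<Longrightarrow> mtrace (A + B) = mtrace A + mtrace B"
  by (simp add: mtrace_def sum.distrib)
lemma mtrace_smult: "A \<in> carrier_mat n n \<Longrightarrow> mtrace (c \<cdot>\<^sub>m A) = c * mtrace A"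
  by (auto simp: mtrace_def sum_distrib_left intro!: sum.cong)

definition dg :: "nat \<Rightarrow> (nat \<Rightarrow> real) \<Rightarrow> complex mat" where
  "dg n f = mat n n (\<lambda>(i,j). if i = j then complex_of_real (f i) else 0)"
definition unitary :: "nat \<Rightarrow> complex mat \<Rightarrow> bool" where
  "unitary n U \<longleftrightarrow> U \<in> carrier_mat n n \<and> adj U * U = 1\<^sub>m n \<and> U * adj U = 1\<^sub>m n"

lemma dg_carrier[simp]: "dg n f \<in> carrier_mat n n" by (simp add: dg_def)
lemma dim_dg[simp]: "dim_row (dg n f) = n" "dim_col (dg n f) = n" by (simp_all add: dg_def)
lemma index_dg[simp]: "i < n \<Longrightarrow> j < n \<Longrightarrow> dg n f $$ (i,j) = (if i = j then complex_of_real (f i) else 0)"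
  by (simp add: dg_def)
lemma adj_dg[simp]: "adj (dg n f) = dg n f" by (intro eq_matI) auto
lemma dg_mult_vec: "v \<in> carrier_vec n \<Longrightarrow> dg n f *\<^sub>v v = vec n (\<lambda>i. complex_of_real (f i) * v$i)"
proof (intro eq_vecI)
  fix i assume v: "v \<in> carrier_vec n" and i: "i < dim_vec (vec n (\<lambda>i. complex_of_real (f i) * v$i))"
  hence i: "i < n" by simp
  have "(dg n f *\<^sub>v v) $ i = (\<Sum>j<n. (if i = j then complex_of_real (f i) else 0) * v$j)"
    using v i by (simp add: scalar_prod_def atLeast0LessThan)
  also have "\<dots> = (\<Sum>j<n. if j = i then complex_of_real (f i) * v$i else 0)"
    by (rule sum.cong) auto
  also have "\<dots> = complex_of_real (f i) * v$i"
    using i by simp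
  finally show "(dg n f *\<^sub>v v) $ i = vec n (\<lambda>i. complex_of_real (f i) * v$i) $ i" using i by simp
qed simp
lemma dg_mult[simp]: "dg n f * dg n g = dg n (\<lambda>i. f i * g i)"
proof (intro eq_matI)
  fix i j assume "i < dim_row (dg n (\<lambda>i. f i * g i))" "j < dim_col (dg n (\<lambda>i. f i * g i))"
  hence ij: "i < n" "j < n" by auto
  have "(dg n f * dg n g) $$ (i,j) = (\<Sum>k<n. (if i = k then complex_of_real (f i) else 0) * (if k = j then complex_of_real (g k) else 0))"
    using ij by (simp add: scalar_prod_def atLeast0LessThan)
  also have "\<dots> = (\<Sum>k<n. if k = i then (if i = j then complex_of_real (f i * g i) else 0) else 0)"
    by (rule sum.cong) auto
  also have "\<dots> = (if i = j then complex_of_real (f i * g i) else 0)"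
    using ij by simp
  finally show "(dg n f * dg n g) $$ (i,j) = dg n (\<lambda>i. f i * g i) $$ (i,j)" using ij by simp
qed auto
lemma dg_one: "dg n (\<lambda>_. 1) = 1\<^sub>m n" by (intro eq_matI) auto
lemma cnj_mult_self: "cnj z * z = complex_of_real ((cmod z)\<^sup>2)"
  by (subst complex_norm_square) (simp add: mult.commute)
lemma cinner_dg: assumes "y \<in> carrier_vec n"
  shows "cinner y (dg n f *\<^sub>v y) = complex_of_real (\<Sum>i<n. f i * (cmod (y$i))\<^sup>2)"
proof -
  have "cinner y (dg n f *\<^sub>v y) = (\<Sum>i<n. cnj (y$i) * (complex_of_real (f i) * y$i))"
    using assms by (simp add: dg_mult_vec cinner_def)
  also have "\<dots> = (\<Sum>i<n. complex_of_real (f i * (cmod (y$i))\<^sup>2))"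
  proof (rule sum.cong[OF refl])
    fix i
    have "cnj (y$i) * (complex_of_real (f i) * y$i) = complex_of_real (f i) * (cnj (y$i) * y$i)"
      by (simp add: mult_ac)
    also have "\<dots> = complex_of_real (f i * (cmod (y$i))\<^sup>2)"
      by (simp only: cnj_mult_self of_real_mult)
    finally show "cnj (y$i) * (complex_of_real (f i) * y$i) = complex_of_real (f i * (cmod (y$i))\<^sup>2)" .
  qed
  finally show ?thesis by (simp add: of_real_sum)
qed


lemma mult_unit_vec_index: "(A :: complex mat) \<in> carrier_mat n m \<Longrightarrow> i < n \<Longrightarrow> j < m \<Longrightarrow> (A *\<^sub>v unit_vec m j) $ i = A $$ (i,j)"
  by (simp add: scalar_prod_def unit_vec_def atLeast0LessThan if_distrib cong: if_cong)

lemma mat_eq_vecI: fixes A B :: "complex mat" assumes "A \<in> carrier_mat n m" "B \<in> carrier_mat n m"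
  and "\<And>v. v \<in> carrier_vec m \<Longrightarrow> A *\<^sub>v v = B *\<^sub>v v"
  shows "A = B"
proof (rule eq_matI)
  fix i j assume ij: "i < dim_row B" "j < dim_col B"
  hence ij': "i < n" "j < m" using assms by auto
  have "A $$ (i,j) = (A *\<^sub>v unit_vec m j) $ i" using assms(1) ij' by (simp add: mult_unit_vec_index)
  also have "\<dots> = (B *\<^sub>v unit_vec m j) $ i" using assms(3)[of "unit_vec m j"] by simp
  also have "\<dots> = B $$ (i,j)" using assms(2) ij' by (simp add: mult_unit_vec_index)
  finally show "A $$ (i,j) = B $$ (i,j)" .
qed (use assms in auto)

lemma smult_mat_mult_vec: "(A :: complex mat) \<in> carrier_mat n m \<Longrightarrow> v \<in> carrier_vec m \<Longrightarrow> (c \<cdot>\<^sub>m A) *\<^sub>v v = c \<cdot>\<^sub>v (A *\<^sub>v v)"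
  by (intro eq_vecI) (auto simp: scalar_prod_def sum_distrib_left mult.assoc intro!: sum.cong)
lemma mult_vec_smult: "dim_vec (v :: complex vec) = dim_col A \<Longrightarrow> A *\<^sub>v (c \<cdot>\<^sub>v v) = c \<cdot>\<^sub>v (A *\<^sub>v v)"
  by (intro eq_vecI) (auto simp: scalar_prod_def sum_distrib_left mult_ac)

lemma massoc: "dim_col (A :: complex mat) = dim_row B \<Longrightarrow> dim_col B = dim_row C \<Longrightarrow> A * B * C = A * (B * C)"
  by (rule assoc_mult_mat[of A "dim_row A" "dim_col A" B "dim_col B" C "dim_col C"]) auto
lemma massoc_vec: "dim_col (A :: complex mat) = dim_row B \<Longrightarrow> dim_col B = dim_vec v \<Longrightarrow> A * B *\<^sub>v v = A *\<^sub>v (B *\<^sub>v v)"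
  by (rule assoc_mult_mat_vec[of A "dim_row A" "dim_col A" B "dim_col B" v]) auto

lemma unitary_dims[simp]: "unitary n U \<Longrightarrow> dim_row U = n" "unitary n U \<Longrightarrow> dim_col U = n"
  by (auto simp: unitary_def)
lemma unitary_carrier: "unitary n U \<Longrightarrow> U \<in> carrier_mat n n" by (simp add: unitary_def)
lemma unitary_adj_mult[simp]: "unitary n U \<Longrightarrow> adj U * U = 1\<^sub>m n" unfolding unitary_def by blast
lemma unitary_mult_adj[simp]: "unitary n U \<Longrightarrow> U * adj U = 1\<^sub>m n" unfolding unitary_def by blast

lemma uc1a: "unitary n U \<Longrightarrow> dim_row X = n \<Longrightarrow> adj U * (U * X) = (adj U * U) * X" by (rule massoc[symmetric]) auto
lemma uc1b: "unitary n U \<Longrightarrow> dim_row X = n \<Longrightarrow> (adj U * U) * X = X" by simp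
lemma uc2a: "unitary n U \<Longrightarrow> dim_row X = n \<Longrightarrow> U * (adj U * X) = (U * adj U) * X" by (rule massoc[symmetric]) auto
lemma uc2b: "unitary n U \<Longrightarrow> dim_row X = n \<Longrightarrow> (U * adj U) * X = X" by simp
lemma uc3a: "unitary n U \<Longrightarrow> dim_vec x = n \<Longrightarrow> adj U *\<^sub>v (U *\<^sub>v x) = (adj U * U) *\<^sub>v x" by (rule massoc_vec[symmetric]) auto
lemma uc3b: assumes "unitary n U" "dim_vec x = n" shows "(adj U * U) *\<^sub>v x = x"
proof -
  have x: "x \<in> carrier_vec n" using assms(2) by (rule carrier_vecI)
  have "adj U * U = 1\<^sub>m n" using assms(1) by (rule unitary_adj_mult)
  thus ?thesis using x by simp
qed
lemma uc4a: "unitary n U \<Longrightarrow> dim_vec x = n \<Longrightarrow> U *\<^sub>v (adj U *\<^sub>v x) = (U * adj U) *\<^sub>v x" by (rule massoc_vec[symmetric]) auto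
lemma uc4b: assumes "unitary n U" "dim_vec x = n" shows "(U * adj U) *\<^sub>v x = x"
proof -
  have x: "x \<in> carrier_vec n" using assms(2) by (rule carrier_vecI)
  have "U * adj U = 1\<^sub>m n" using assms(1) by (rule unitary_mult_adj)
  thus ?thesis using x by simp
qed
lemma unitary_cancel1[simp]: "unitary n U \<Longrightarrow> dim_row X = n \<Longrightarrow> adj U * (U * X) = X" using uc1a uc1b by metis
lemma unitary_cancel2[simp]: "unitary n U \<Longrightarrow> dim_row X = n \<Longrightarrow> U * (adj U * X) = X" using uc2a uc2b by metis
lemma unitary_cancel_vec1[simp]: "unitary n U \<Longrightarrow> dim_vec x = n \<Longrightarrow> adj U *\<^sub>v (U *\<^sub>v x) = x" using uc3a uc3b by metis
lemma unitary_cancel_vec2[simp]: "unitary n U \<Longrightarrow> dim_vec x = n \<Longrightarrow> U *\<^sub>v (adj U *\<^sub>v x) = x" using uc4a uc4b by metis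

lemma unitary_adj: assumes "unitary n U" shows "unitary n (adj U)"
  using assms unfolding unitary_def by (auto simp del: unitary_dims)
lemma unitary_mult: assumes "unitary n U" "unitary n V" shows "unitary n (U * V)"
proof -
  have a: "adj (U * V) = adj V * adj U" using assms by (intro adj_mult[of U n n V n]) (auto simp: unitary_carrier)
  have 1: "adj (U * V) * (U * V) = 1\<^sub>m n"
    unfolding a using assms by (simp add: massoc)
  have 2: "(U * V) * adj (U * V) = 1\<^sub>m n"
    unfolding a using assms by (simp add: massoc)
  show ?thesis unfolding unitary_def using 1 2 assms by (auto intro!: carrier_matI)
qed
lemma unitary_cinner: assumes "unitary n U" "dim_vec x = n" "dim_vec y = n"
  shows "cinner (U *\<^sub>v x) (U *\<^sub>v y) = cinner x y"
proof -
  have "cinner (U *\<^sub>v x) (U *\<^sub>v y) = cinner (adj U *\<^sub>v (U *\<^sub>v x)) y"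
    by (rule cinner_adj[of U n n]) (use assms in \<open>auto intro!: carrier_vecI simp: unitary_carrier\<close>)
  also have "adj U *\<^sub>v (U *\<^sub>v x) = x" using assms by simp
  finally show ?thesis .
qed

definition rep :: "nat \<Rightarrow> complex mat \<Rightarrow> (nat \<Rightarrow> real) \<Rightarrow> complex mat" where
  "rep n U f = U * dg n f * adj U"

lemma rep_dims[simp]: "unitary n U \<Longrightarrow> dim_row (rep n U f) = n" "unitary n U \<Longrightarrow> dim_col (rep n U f) = n"
  by (simp_all add: rep_def)
lemma rep_carrier: "unitary n U \<Longrightarrow> rep n U f \<in> carrier_mat n n"
  by (rule carrier_matI) simp_all
lemma adj_rep: assumes "unitary n U" shows "adj (rep n U f) = rep n U f"
proof -
  have "adj (rep n U f) = adj (adj U) * adj (U * dg n f)"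
    unfolding rep_def using assms by (intro adj_mult[of _ n n _ n]) (auto intro!: carrier_matI)
  also have "\<dots> = U * (dg n f * adj U)" using assms by (simp add: adj_mult[of U n n _ n] unitary_carrier)
  also have "\<dots> = rep n U f" unfolding rep_def using assms by (simp add: massoc)
  finally show ?thesis .
qed
lemma dg_mult_assoc[simp]: "dim_row X = n \<Longrightarrow> dg n f * (dg n g * X) = dg n (\<lambda>i. f i * g i) * X"
  by (subst massoc[symmetric]) auto
lemma rep_mult: assumes "unitary n U" shows "rep n U f * rep n U g = rep n U (\<lambda>i. f i * g i)"
  unfolding rep_def using assms by (simp add: massoc)
lemma rep_one: "unitary n U \<Longrightarrow> rep n U (\<lambda>_. 1) = 1\<^sub>m n"
  unfolding rep_def dg_one by simp
lemma rep_mult_vec: assumes "unitary n U" "dim_vec x = n"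
  shows "rep n U f *\<^sub>v x = U *\<^sub>v (dg n f *\<^sub>v (adj U *\<^sub>v x))"
  using assms unfolding rep_def
  by (simp add: massoc_vec)
lemma cinner_rep: assumes "unitary n U" "dim_vec x = n"
  shows "cinner x (rep n U f *\<^sub>v x) = complex_of_real (\<Sum>i<n. f i * (cmod ((adj U *\<^sub>v x)$i))\<^sup>2)"
proof -
  have "cinner x (rep n U f *\<^sub>v x) = cinner x (U *\<^sub>v (dg n f *\<^sub>v (adj U *\<^sub>v x)))"
    using assms by (simp add: rep_mult_vec)
  also have "\<dots> = cinner (adj U *\<^sub>v x) (dg n f *\<^sub>v (adj U *\<^sub>v x))"
    by (rule cinner_adj[of U n n]) (use assms in \<open>auto intro!: carrier_vecI simp: unitary_carrier\<close>)
  also have "\<dots> = complex_of_real (\<Sum>i<n. f i * (cmod ((adj U *\<^sub>v x)$i))\<^sup>2)"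
    using assms by (intro cinner_dg) (auto intro!: carrier_vecI)
  finally show ?thesis .
qed
lemma rep_col: assumes "unitary n U" "i < n"
  shows "rep n U f *\<^sub>v (U *\<^sub>v unit_vec n i) = complex_of_real (f i) \<cdot>\<^sub>v (U *\<^sub>v unit_vec n i)"
proof -
  have "dg n f *\<^sub>v unit_vec n i = complex_of_real (f i) \<cdot>\<^sub>v unit_vec n i"
    using assms by (intro eq_vecI) (auto simp: dg_mult_vec)
  thus ?thesis using assms
    by (simp add: rep_mult_vec mult_vec_smult)
qed


lemma cinner_unit_vec_left: "j < n \<Longrightarrow> dim_vec v = n \<Longrightarrow> cinner (unit_vec n j) v = v $ j"
proof -
  assume a: "j < n" "dim_vec v = n"
  have "cinner (unit_vec n j) v = (\<Sum>i<n. if i = j then v $ j else 0)"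
    unfolding cinner_def using a by (intro sum.cong) auto
  thus ?thesis using a by simp
qed
lemma cinner_unit_vec_right: "j < n \<Longrightarrow> dim_vec v = n \<Longrightarrow> cinner v (unit_vec n j) = cnj (v $ j)"
  using cinner_commute[of "unit_vec n j" v] cinner_unit_vec_left[of j n v] by simp

lemma smult_smult_mat: "a \<cdot>\<^sub>m (b \<cdot>\<^sub>m (A :: complex mat)) = (a * b) \<cdot>\<^sub>m A"
  by (intro eq_matI) auto

lemma one_smult_mat[simp]: "(1::complex) \<cdot>\<^sub>m A = A"
  by (intro eq_matI) auto

lemma H_mult_vec: assumes "dim_vec w = n" "dim_vec v = n"
  shows "(1\<^sub>m n - c \<cdot>\<^sub>m ketbra w w) *\<^sub>v v = v - (c * cinner w v) \<cdot>\<^sub>v w"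
proof (rule eq_vecI)
  fix i assume "i < dim_vec (v - (c * cinner w v) \<cdot>\<^sub>v w)"
  hence i: "i < n" using assms by simp
  have "((1\<^sub>m n - c \<cdot>\<^sub>m ketbra w w) *\<^sub>v v) $ i = (\<Sum>j<n. ((if i = j then 1 else 0) - c * (w$i * cnj (w$j))) * v$j)"
    using i assms by (simp add: scalar_prod_def atLeast0LessThan)
  also have "\<dots> = (\<Sum>j<n. (if j = i then v$i else 0) - c * w$i * (cnj (w$j) * v$j))"
    by (rule sum.cong) (auto simp: algebra_simps)
  also have "\<dots> = (\<Sum>j<n. (if j = i then v$i else 0)) - c * w$i * (\<Sum>j<n. cnj (w$j) * v$j)"
    by (simp add: sum_subtractf sum_distrib_left)
  also have "\<dots> = (v - (c * cinner w v) \<cdot>\<^sub>v w) $ i"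
    using i assms by (simp add: cinner_def)
  finally show "((1\<^sub>m n - c \<cdot>\<^sub>m ketbra w w) *\<^sub>v v) $ i = (v - (c * cinner w v) \<cdot>\<^sub>v w) $ i" .
qed (use assms in simp)

lemma householder: assumes u: "dim_vec u = n" "0 < n" "cinner u u = 1"
  shows "\<exists>W. unitary n W \<and> W *\<^sub>v unit_vec n 0 = u"
proof -
  define \<alpha> where "\<alpha> = (if u$0 = 0 then 1 else u$0 / complex_of_real (cmod (u$0)))"
  define x where "x = \<alpha> \<cdot>\<^sub>v unit_vec n 0"
  define w where "w = x - u"
  define r where "r = complex_of_real (cmod (u$0))"
  define c where "c = complex_of_real (2 / Re (cinner w w))"
  define H where "H = 1\<^sub>m n - c \<cdot>\<^sub>m ketbra w w"
  define W where "W = \<alpha> \<cdot>\<^sub>m H"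
  have dx: "dim_vec x = n" and dw: "dim_vec w = n" unfolding x_def w_def using u by auto
  have ur: "u$0 * cnj (u$0) = r * r" unfolding r_def
    by (metis complex_norm_square of_real_mult power2_eq_square)
  have \<alpha>1: "cnj \<alpha> * \<alpha> = 1"
  proof (cases "u$0 = 0")
    case False
    hence "cmod (u$0) \<noteq> 0" by simp
    thus ?thesis using False ur unfolding \<alpha>_def r_def
      by (simp add: field_simps)
  qed (simp add: \<alpha>_def)
  have \<alpha>2: "\<alpha> * cnj \<alpha> = 1" using \<alpha>1 by (simp add: mult.commute)
  have xx: "cinner x x = 1" unfolding x_def using u
    by (simp add: cinner_smult_left cinner_smult_right cinner_unit_vec_left \<alpha>1 \<alpha>2)
  have ux: "cinner u x = r"
  proof -
    have "cinner u x = \<alpha> * cnj (u$0)" unfolding x_def using u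
      by (simp add: cinner_smult_right cinner_unit_vec_right)
    also have "\<dots> = r"
    proof (cases "u$0 = 0")
      case False
      hence "cmod (u$0) \<noteq> 0" by simp
      have "u$0 * cnj (u$0) = r * r" unfolding r_def
        by (metis complex_norm_square of_real_mult power2_eq_square)
      thus ?thesis using False \<open>cmod (u$0) \<noteq> 0\<close> unfolding \<alpha>_def r_def
        by (simp add: field_simps)
    qed (simp add: \<alpha>_def r_def)
    finally show ?thesis .
  qed
  have xu: "cinner x u = r" using cinner_commute[of u x] ux dx u unfolding r_def by simp
  have ww: "cinner w w = 2 - 2 * r" unfolding w_def using dx u xx ux xu
    by (simp add: cinner_minus_left cinner_minus_right)
  have wx: "cinner w x = 1 - r" unfolding w_def using dx u xx ux
    by (simp add: cinner_minus_left)
  have Hv: "H *\<^sub>v v = v - (c * cinner w v) \<cdot>\<^sub>v w" if "dim_vec v = n" for v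
    unfolding H_def using H_mult_vec[OF dw that] .
  have cw: "c * (2 - c * cinner w w) = 0"
  proof (cases "Re (cinner w w) = 0")
    case True thus ?thesis unfolding c_def by simp
  next
    case False
    have "cinner w w = complex_of_real (Re (cinner w w))" unfolding cinner_self by simp
    thus ?thesis unfolding c_def using False by (simp add: field_simps)
  qed
  have HH: "H *\<^sub>v (H *\<^sub>v v) = v" if v: "dim_vec v = n" for v
  proof -
    have d1: "dim_vec (H *\<^sub>v v) = n" unfolding H_def using dw by simp
    have "cinner w (H *\<^sub>v v) = cinner w v - c * cinner w v * cinner w w"
      using v dw by (simp add: Hv cinner_minus_right cinner_smult_right)
    hence "H *\<^sub>v (H *\<^sub>v v) = (v - (c * cinner w v) \<cdot>\<^sub>v w) - (c * (cinner w v - c * cinner w v * cinner w w)) \<cdot>\<^sub>v w"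
      using Hv[OF d1] Hv[OF v] by simp
    also have "\<dots> = v"
    proof (rule eq_vecI)
      fix i assume "i < dim_vec v"
      hence i: "i < n" using v by simp
      have "c * cinner w v * w$i + c * (cinner w v - c * cinner w v * cinner w w) * w$i
          = cinner w v * w$i * (c * (2 - c * cinner w w))" by (simp add: algebra_simps)
      thus "((v - (c * cinner w v) \<cdot>\<^sub>v w) - (c * (cinner w v - c * cinner w v * cinner w w)) \<cdot>\<^sub>v w) $ i = v $ i"
        using i v dw cw by (auto simp: algebra_simps)
    qed (use v dw in simp)
    finally show ?thesis .
  qed
  have Hc: "H \<in> carrier_mat n n" unfolding H_def by (rule carrier_matI) (use dw in simp)+
  have cc: "cnj c = c" unfolding c_def by simp
  have adjH: "adj H = H" unfolding H_def
    by (subst adj_minus[of _ n n]) (auto simp: adj_smult adj_ketbra cc dw)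
  have HH1: "H * H = 1\<^sub>m n"
    by (rule mat_eq_vecI[of _ n n]) (use Hc HH in \<open>auto simp: massoc_vec\<close>)
  have Wc: "W \<in> carrier_mat n n" unfolding W_def using Hc by simp
  have adjW: "adj W = cnj \<alpha> \<cdot>\<^sub>m H" unfolding W_def by (simp add: adj_smult adjH)
  have "adj W * W = (cnj \<alpha> * \<alpha>) \<cdot>\<^sub>m (H * H)" unfolding adjW unfolding W_def using Hc
    by (simp add: mult_smult_distrib[of _ n n] mult_smult_assoc_mat[of _ n n] smult_smult_mat mult.commute)
  hence 1: "adj W * W = 1\<^sub>m n" using \<alpha>1 HH1 by simp
  have "W * adj W = (\<alpha> * cnj \<alpha>) \<cdot>\<^sub>m (H * H)" unfolding adjW unfolding W_def using Hc
    by (simp add: mult_smult_distrib[of _ n n] mult_smult_assoc_mat[of _ n n] smult_smult_mat mult.commute)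
  hence 2: "W * adj W = 1\<^sub>m n" using \<alpha>2 HH1 by simp
  have unit: "unitary n W" unfolding unitary_def using Wc 1 2 by blast
  have "W *\<^sub>v unit_vec n 0 = H *\<^sub>v x"
    unfolding W_def x_def using Hc by (simp add: smult_mat_mult_vec[of _ n n] mult_vec_smult)
  also have "\<dots> = x - (c * (1 - r)) \<cdot>\<^sub>v w" using Hv[OF dx] wx by simp
  also have "\<dots> = u"
  proof (cases "Re (cinner w w) = 0")
    case True
    hence "cinner w w = 0" unfolding cinner_self by simp
    hence "w = 0\<^sub>v n" using cinner_self_eq_0[of w] dw by simp
    have "x = u"
    proof (rule eq_vecI)
      fix i assume i: "i < dim_vec u"
      have "w $ i = 0" using \<open>w = 0\<^sub>v n\<close> i u by simp
      thus "x $ i = u $ i" unfolding w_def using i dx u by simp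
    qed (use dx u in simp)
    thus ?thesis using \<open>w = 0\<^sub>v n\<close> u by (intro eq_vecI) auto
  next
    case False
    have "Re (cinner w w) = 2 - 2 * cmod (u$0)" using ww unfolding r_def by simp
    hence "2 / Re (cinner w w) * (1 - cmod (u$0)) = 1" using False by (simp add: field_simps)
    hence "c * (1 - r) = 1" unfolding c_def r_def by (metis of_real_1 of_real_diff of_real_mult)
    thus ?thesis unfolding w_def using dx u by (intro eq_vecI) auto
  qed
  finally show ?thesis using unit by blast
qed


definition corner :: "complex \<Rightarrow> complex mat \<Rightarrow> complex mat" where
  "corner a X = mat (Suc (dim_row X)) (Suc (dim_col X))
     (\<lambda>(i,j). if i = 0 \<and> j = 0 then a else if i = 0 \<or> j = 0 then 0 else X $$ (i - 1, j - 1))"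

lemma corner_dims[simp]: "dim_row (corner a X) = Suc (dim_row X)" "dim_col (corner a X) = Suc (dim_col X)"
  by (simp_all add: corner_def)
lemma index_corner[simp]: "i < Suc (dim_row X) \<Longrightarrow> j < Suc (dim_col X) \<Longrightarrow>
  corner a X $$ (i,j) = (if i = 0 \<and> j = 0 then a else if i = 0 \<or> j = 0 then 0 else X $$ (i - 1, j - 1))"
  by (simp add: corner_def)

lemma corner_mult: assumes "dim_col X = dim_row Y"
  shows "corner a X * corner b Y = corner (a * b) (X * Y)"
proof (rule eq_matI)
  fix i j assume ij: "i < dim_row (corner (a * b) (X * Y))" "j < dim_col (corner (a * b) (X * Y))"
  hence ij': "i < Suc (dim_row X)" "j < Suc (dim_col Y)" by auto
  have "(corner a X * corner b Y) $$ (i,j) = (\<Sum>k<Suc (dim_col X). corner a X $$ (i,k) * corner b Y $$ (k,j))"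
    using ij' assms by (simp add: scalar_prod_def atLeast0LessThan)
  also have "\<dots> = corner a X $$ (i,0) * corner b Y $$ (0,j) + (\<Sum>k<dim_col X. corner a X $$ (i,Suc k) * corner b Y $$ (Suc k,j))"
    by (rule sum.lessThan_Suc_shift)
  also have "\<dots> = corner (a * b) (X * Y) $$ (i,j)"
  proof (cases i)
    case 0
    thus ?thesis using ij' assms by simp
  next
    case (Suc i')
    show ?thesis
    proof (cases j)
      case 0
      thus ?thesis using ij' assms Suc by simp
    next
      case (Suc j')
      thus ?thesis using ij' assms \<open>i = Suc i'\<close> by (simp add: scalar_prod_def atLeast0LessThan)
    qed
  qed
  finally show "(corner a X * corner b Y) $$ (i,j) = corner (a * b) (X * Y) $$ (i,j)" .
qed auto

lemma adj_corner: "adj (corner a X) = corner (cnj a) (adj X)"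
  by (rule eq_matI) auto
lemma corner_one: "corner 1 (1\<^sub>m m) = 1\<^sub>m (Suc m)"
  by (rule eq_matI) auto
lemma dg_corner: "dg (Suc m) f = corner (complex_of_real (f 0)) (dg m (\<lambda>i. f (Suc i)))"
  by (rule eq_matI) (auto simp: nat.split)
lemma unitary_corner: assumes "unitary m U" shows "unitary (Suc m) (corner 1 U)"
proof -
  have "adj (corner 1 U) * corner 1 U = 1\<^sub>m (Suc m)"
    unfolding adj_corner using assms by (simp add: corner_mult corner_one)
  moreover have "corner 1 U * adj (corner 1 U) = 1\<^sub>m (Suc m)"
    unfolding adj_corner using assms by (simp add: corner_mult corner_one)
  ultimately show ?thesis unfolding unitary_def using assms by (auto intro!: carrier_matI)
qed

lemma real_of_cnj: "cnj a = a \<Longrightarrow> complex_of_real (Re a) = a"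
  by (metis Reals_cnj_iff complex_is_Real_iff of_real_Re)

theorem spectral:
  "A \<in> carrier_mat n n \<Longrightarrow> adj A = A \<Longrightarrow> \<exists>U f. unitary n U \<and> A = rep n U f"
proof (induction n arbitrary: A)
  case 0
  have "unitary 0 (1\<^sub>m 0)" unfolding unitary_def by auto
  moreover have "A = rep 0 (1\<^sub>m 0) (\<lambda>_. 0)" using 0 unfolding rep_def by (intro eq_matI) auto
  ultimately show ?case by blast
next
  case (Suc m)
  note A = Suc.prems(1) and hA = Suc.prems(2)
  let ?n = "Suc m"
  obtain as where cp: "char_poly A = (\<Prod>a\<leftarrow>as. [:- a, 1:])" and las: "length as = ?n"
    using char_poly_factorized[OF A] by blast
  then obtain a rest where as: "as = a # rest" by (cases as) auto
  have "poly (char_poly A) a = 0" unfolding cp as by simp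
  hence "eigenvalue A a" using eigenvalue_root_char_poly[OF A] by simp
  then obtain v where v: "v \<in> carrier_vec ?n" "v \<noteq> 0\<^sub>v ?n" "A *\<^sub>v v = a \<cdot>\<^sub>v v"
    unfolding eigenvalue_def eigenvector_def using A by auto
  have dv: "dim_vec v = ?n" using v by simp
  define vn where "vn = vnorm v"
  have "cinner v v \<noteq> 0" using v dv cinner_self_eq_0[of v] by simp
  hence vn0: "vn \<noteq> 0" unfolding vn_def using cinner_self_vnorm[of v] by auto
  define u where "u = (1 / complex_of_real vn) \<cdot>\<^sub>v v"
  have du: "dim_vec u = ?n" unfolding u_def using dv by simp
  have uu: "cinner u u = 1"
  proof -
    have "cinner u u = (1 / complex_of_real vn) * (1 / complex_of_real vn) * cinner v v"
      unfolding u_def by (simp add: cinner_smult_left cinner_smult_right)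
    also have "cinner v v = complex_of_real vn * complex_of_real vn"
      unfolding vn_def cinner_self_vnorm by (simp add: power2_eq_square)
    finally show ?thesis using vn0 by simp
  qed
  have Au: "A *\<^sub>v u = a \<cdot>\<^sub>v u" unfolding u_def using v A
    by (simp add: mult_vec_smult smult_smult_assoc mult.commute)
  obtain W where W: "unitary ?n W" "W *\<^sub>v unit_vec ?n 0 = u"
    using householder[OF du _ uu] by auto
  define A' where "A' = adj W * A * W"
  have A'd: "dim_row A' = ?n" "dim_col A' = ?n" unfolding A'_def using W A by auto
  have hA': "adj A' = A'"
  proof -
    have "adj A' = adj W * adj (adj W * A)" unfolding A'_def
      using W A by (intro adj_mult[of _ ?n ?n _ ?n]) (auto intro!: carrier_matI)
    also have "adj (adj W * A) = adj A * W"
      using W A by (subst adj_mult[of _ ?n ?n _ ?n]) (auto intro!: carrier_matI)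
    finally show ?thesis unfolding A'_def hA using W A by (simp add: massoc)
  qed
  have col0: "A' *\<^sub>v unit_vec ?n 0 = a \<cdot>\<^sub>v unit_vec ?n 0"
  proof -
    have "A' *\<^sub>v unit_vec ?n 0 = adj W *\<^sub>v (A *\<^sub>v (W *\<^sub>v unit_vec ?n 0))"
      unfolding A'_def using W A du by (simp add: massoc_vec)
    also have "\<dots> = a \<cdot>\<^sub>v (adj W *\<^sub>v (W *\<^sub>v unit_vec ?n 0))"
      unfolding W(2) Au using W du by (simp add: mult_vec_smult)
    also have "\<dots> = a \<cdot>\<^sub>v unit_vec ?n 0" using W(1) by simp
    finally show ?thesis .
  qed
  have A'i0: "A' $$ (i, 0) = (if i = 0 then a else 0)" if "i < ?n" for i
  proof -
    have "A' $$ (i, 0) = (A' *\<^sub>v unit_vec ?n 0) $ i"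
      using that A'd by (intro mult_unit_vec_index[symmetric]) (auto intro!: carrier_matI)
    thus ?thesis unfolding col0 using that by simp
  qed
  have A'0j: "A' $$ (0, j) = cnj (A' $$ (j, 0))" if "j < ?n" for j
  proof -
    have "A' $$ (0, j) = adj A' $$ (0, j)" using hA' by simp
    thus ?thesis using that A'd by simp
  qed
  have ar: "cnj a = a" using A'0j[of 0] A'i0[of 0] by simp
  define X where "X = mat m m (\<lambda>(i,j). A' $$ (Suc i, Suc j))"
  have Xc: "X \<in> carrier_mat m m" unfolding X_def by simp
  have hX: "adj X = X"
  proof (rule eq_matI)
    fix i j assume "i < dim_row X" "j < dim_col X"
    hence ij: "i < m" "j < m" unfolding X_def by auto
    have "adj X $$ (i,j) = cnj (A' $$ (Suc j, Suc i))" using ij unfolding X_def by simp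
    also have "\<dots> = adj A' $$ (Suc i, Suc j)" using ij A'd by simp
    also have "\<dots> = X $$ (i,j)" using ij unfolding hA' X_def by simp
    finally show "adj X $$ (i,j) = X $$ (i,j)" .
  qed (auto simp: X_def)
  have A'X: "A' = corner a X"
  proof (rule eq_matI)
    fix i j assume "i < dim_row (corner a X)" "j < dim_col (corner a X)"
    hence ij: "i < ?n" "j < ?n" unfolding X_def by auto
    show "A' $$ (i,j) = corner a X $$ (i,j)"
    proof (cases "i = 0 \<or> j = 0")
      case True
      thus ?thesis using ij A'i0 A'0j ar unfolding X_def by auto
    next
      case False
      thus ?thesis using ij unfolding X_def by auto
    qed
  qed (auto simp: A'd X_def)
  obtain U3 f3 where U3: "unitary m U3" "X = rep m U3 f3"
    using Suc.IH[OF Xc hX] by blast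
  define U where "U = W * corner 1 U3"
  define f where "f = (\<lambda>i. if i = 0 then Re a else f3 (i - 1))"
  have uU: "unitary ?n U" unfolding U_def using W(1) unitary_corner[OF U3(1)] by (rule unitary_mult)
  have dgf: "dg ?n f = corner a (dg m f3)"
    unfolding dg_corner f_def using real_of_cnj[OF ar] by simp
  have adjU: "adj U = corner 1 (adj U3) * adj W"
    unfolding U_def using W U3 by (subst adj_mult[of _ ?n ?n _ ?n]) (auto simp: adj_corner intro!: carrier_matI)
  have "rep ?n U f = W * (corner 1 U3 * corner a (dg m f3) * corner 1 (adj U3)) * adj W"
    unfolding rep_def adjU dgf unfolding U_def using W U3 by (simp add: massoc)
  also have "corner 1 U3 * corner a (dg m f3) * corner 1 (adj U3) = A'"
    unfolding A'X U3(2) rep_def using U3 by (simp add: corner_mult)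
  also have "W * A' * adj W = A"
    unfolding A'_def using W A by (simp add: massoc)
  finally show ?case using uU by metis
qed


lemma mult_zero_vec[simp]: "dim_col (A :: complex mat) = n \<Longrightarrow> A *\<^sub>v 0\<^sub>v n = 0\<^sub>v (dim_row A)"
  by (intro eq_vecI) (auto simp: scalar_prod_def)

lemma cinner_uminus_right: "cinner x (- v) = - cinner x v"
  by (simp add: cinner_def sum_negf)

lemma unit_col_cinner: assumes "unitary n U" "i < n"
  shows "cinner (U *\<^sub>v unit_vec n i) (U *\<^sub>v unit_vec n i) = 1"
  using assms by (simp add: unitary_cinner cinner_unit_vec_left)
lemma unit_col_dim[simp]: "unitary n U \<Longrightarrow> dim_vec (U *\<^sub>v unit_vec n i) = n" by simp

lemma rep_eigen_val: assumes "unitary n U" "i < n"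
  shows "cinner (U *\<^sub>v unit_vec n i) (rep n U f *\<^sub>v (U *\<^sub>v unit_vec n i)) = complex_of_real (f i)"
  using assms by (simp add: rep_col cinner_smult_right unit_col_cinner)

lemma rep_cong: "(\<And>i. i < n \<Longrightarrow> f i = g i) \<Longrightarrow> rep n U f = rep n U g"
proof -
  assume "\<And>i. i < n \<Longrightarrow> f i = g i"
  hence "dg n f = dg n g" by (intro eq_matI) auto
  thus ?thesis unfolding rep_def by simp
qed

lemma rep_pos: assumes "unitary n U" "\<forall>i<n. 0 \<le> f i" shows "positive_op n (rep n U f)"
  unfolding positive_op_def
proof (intro conjI ballI)
  fix x :: "complex vec" assume "x \<in> carrier_vec n"
  hence "Re (cinner x (rep n U f *\<^sub>v x)) = (\<Sum>i<n. f i * (cmod ((adj U *\<^sub>v x)$i))\<^sup>2)"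
    using assms by (simp add: cinner_rep)
  also have "\<dots> \<ge> 0" using assms by (intro sum_nonneg) auto
  finally show "0 \<le> Re (cinner x (rep n U f *\<^sub>v x))" .
qed (use assms in \<open>auto simp: adj_rep rep_carrier\<close>)

lemma rep_spos: assumes "unitary n U" "\<forall>i<n. 0 < f i" shows "strictly_positive n (rep n U f)"
  unfolding strictly_positive_def
proof (intro conjI ballI impI)
  fix x :: "complex vec" assume x: "x \<in> carrier_vec n" "x \<noteq> 0\<^sub>v n"
  define y where "y = adj U *\<^sub>v x"
  have dy: "dim_vec y = n" unfolding y_def using assms by simp
  have "y \<noteq> 0\<^sub>v n"
  proof
    assume "y = 0\<^sub>v n"
    hence "U *\<^sub>v y = 0\<^sub>v n" using assms by simp
    thus False unfolding y_def using x assms by simp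
  qed
  then obtain j where j: "j < n" "y $ j \<noteq> 0" using dy by (metis eq_vecI index_zero_vec)
  have "Re (cinner x (rep n U f *\<^sub>v x)) = (\<Sum>i<n. f i * (cmod (y$i))\<^sup>2)"
    using assms x by (simp add: cinner_rep y_def)
  also have "\<dots> > 0"
  proof (rule sum_pos2[of "{..<n}" j])
    show "0 < f j * (cmod (y$j))\<^sup>2" using j assms by simp
  qed (use assms j in auto)
  finally show "0 < Re (cinner x (rep n U f *\<^sub>v x))" .
qed (use assms in \<open>auto simp: adj_rep rep_carrier\<close>)

lemma pos_rep: assumes "positive_op n A"
  shows "\<exists>U f. unitary n U \<and> A = rep n U f \<and> (\<forall>i<n. 0 \<le> f i)"
proof -
  have A: "A \<in> carrier_mat n n" "adj A = A" using assms unfolding positive_op_def by auto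
  obtain U f where U: "unitary n U" "A = rep n U f" using spectral[OF A] by blast
  have "0 \<le> f i" if "i < n" for i
  proof -
    have "0 \<le> Re (cinner (U *\<^sub>v unit_vec n i) (A *\<^sub>v (U *\<^sub>v unit_vec n i)))"
      using assms U unfolding positive_op_def by (auto intro!: carrier_vecI)
    thus ?thesis unfolding U(2) using rep_eigen_val[OF U(1) that] by simp
  qed
  thus ?thesis using U by blast
qed

lemma spos_rep: assumes "strictly_positive n A"
  shows "\<exists>U f. unitary n U \<and> A = rep n U f \<and> (\<forall>i<n. 0 < f i)"
proof -
  have A: "A \<in> carrier_mat n n" "adj A = A" using assms unfolding strictly_positive_def by auto
  obtain U f where U: "unitary n U" "A = rep n U f" using spectral[OF A] by blast
  have "0 < f i" if "i < n" for i
  proof -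
    have "U *\<^sub>v unit_vec n i \<noteq> 0\<^sub>v n"
    proof
      assume "U *\<^sub>v unit_vec n i = 0\<^sub>v n"
      hence "cinner (U *\<^sub>v unit_vec n i) (U *\<^sub>v unit_vec n i) = 0" by simp
      thus False using unit_col_cinner[OF U(1) that] by simp
    qed
    hence "0 < Re (cinner (U *\<^sub>v unit_vec n i) (A *\<^sub>v (U *\<^sub>v unit_vec n i)))"
      using assms U unfolding strictly_positive_def by (auto intro!: carrier_vecI)
    thus ?thesis unfolding U(2) using rep_eigen_val[OF U(1) that] by simp
  qed
  thus ?thesis using U by blast
qed

lemma spos_pos: "strictly_positive n A \<Longrightarrow> positive_op n A"
  using spos_rep[of n A] rep_pos[of n] by (metis less_imp_le)

lemma psd_sqrt_eigen: assumes S: "positive_op n S" and x: "dim_vec x = n"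
  and eq: "S *\<^sub>v (S *\<^sub>v x) = complex_of_real \<mu> \<cdot>\<^sub>v x" and mu: "0 \<le> \<mu>"
  shows "S *\<^sub>v x = complex_of_real (sqrt \<mu>) \<cdot>\<^sub>v x"
proof -
  have Sc: "S \<in> carrier_mat n n" and hS: "adj S = S" and psd: "\<And>z. z \<in> carrier_vec n \<Longrightarrow> 0 \<le> Re (cinner z (S *\<^sub>v z))"
    using S unfolding positive_op_def by auto
  define r where "r = sqrt \<mu>"
  have r0: "0 \<le> r" unfolding r_def using mu by simp
  have rr: "r * r = \<mu>" unfolding r_def using mu by simp
  show ?thesis
  proof (cases "r = 0")
    case True
    hence mu0: "\<mu> = 0" using rr by simp
    have "cinner (S *\<^sub>v x) (S *\<^sub>v x) = cinner x (S *\<^sub>v (S *\<^sub>v x))"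
      using cinner_adj[OF Sc, of x "S *\<^sub>v x"] hS Sc x by (auto intro!: carrier_vecI)
    also have "\<dots> = 0" unfolding eq mu0 by (simp add: cinner_smult_right)
    finally have "S *\<^sub>v x = 0\<^sub>v n" using cinner_self_eq_0[of "S *\<^sub>v x"] Sc by simp
    thus ?thesis using True x unfolding r_def by (intro eq_vecI) auto
  next
    case False
    hence rpos: "0 < r" using r0 by simp
    define y where "y = S *\<^sub>v x - complex_of_real r \<cdot>\<^sub>v x"
    have dy: "dim_vec y = n" unfolding y_def using Sc x by simp
    have Sy: "S *\<^sub>v y = - (complex_of_real r \<cdot>\<^sub>v y)"
    proof -
      have "S *\<^sub>v y = S *\<^sub>v (S *\<^sub>v x) - S *\<^sub>v (complex_of_real r \<cdot>\<^sub>v x)"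
        unfolding y_def using Sc x by (intro mult_minus_distrib_mat_vec) (auto intro!: carrier_vecI)
      also have "\<dots> = complex_of_real \<mu> \<cdot>\<^sub>v x - complex_of_real r \<cdot>\<^sub>v (S *\<^sub>v x)"
        unfolding eq using Sc x by (simp add: mult_vec_smult)
      also have "\<dots> = - (complex_of_real r \<cdot>\<^sub>v y)"
        unfolding y_def rr[symmetric] using Sc x by (intro eq_vecI) (auto simp: algebra_simps)
      finally show ?thesis .
    qed
    have "Re (cinner y (S *\<^sub>v y)) = - r * Re (cinner y y)"
    proof -
      have "cinner y (S *\<^sub>v y) = - (complex_of_real r * cinner y y)"
        unfolding Sy by (simp add: cinner_uminus_right cinner_smult_right)
      thus ?thesis by simp
    qed
    moreover have "0 \<le> Re (cinner y (S *\<^sub>v y))" using psd dy by (auto intro!: carrier_vecI)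
    ultimately have "r * Re (cinner y y) \<le> 0" by simp
    hence "Re (cinner y y) \<le> 0" using rpos by (simp add: mult_le_0_iff)
    hence "cinner y y = 0" using Re_cinner_self_ge0[of y] unfolding cinner_self by simp
    hence "y = 0\<^sub>v n" using cinner_self_eq_0[of y] dy by simp
    thus ?thesis unfolding r_def[symmetric]
    proof (intro eq_vecI)
      fix i assume "y = 0\<^sub>v n" "i < dim_vec (complex_of_real r \<cdot>\<^sub>v x)"
      hence "y $ i = 0" "i < n" using x by auto
      thus "(S *\<^sub>v x) $ i = (complex_of_real r \<cdot>\<^sub>v x) $ i" unfolding y_def using Sc x by simp
    qed (use Sc x in simp)
  qed
qed

lemma msqrt_rep: assumes U: "unitary n U" and f: "\<forall>i<n. 0 \<le> f i"
  shows "msqrt (rep n U f) = rep n U (\<lambda>i. sqrt (f i))"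
proof -
  let ?A = "rep n U f" and ?R = "rep n U (\<lambda>i. sqrt (f i))"
  have PR: "positive_op n ?R" using U f by (intro rep_pos) auto
  have "?R * ?R = rep n U (\<lambda>i. sqrt (f i) * sqrt (f i))" by (rule rep_mult[OF U])
  also have "\<dots> = ?A" by (rule rep_cong) (use f in auto)
  finally have RR: "?R * ?R = ?A" .
  have uniq: "S = ?R" if S: "positive_op n S" "S * S = ?A" for S
  proof -
    have Sc: "S \<in> carrier_mat n n" using S unfolding positive_op_def by auto
    have col: "S *\<^sub>v (U *\<^sub>v unit_vec n j) = complex_of_real (sqrt (f j)) \<cdot>\<^sub>v (U *\<^sub>v unit_vec n j)" if j: "j < n" for j
    proof (rule psd_sqrt_eigen[OF S(1)])
      show "S *\<^sub>v (S *\<^sub>v (U *\<^sub>v unit_vec n j)) = complex_of_real (f j) \<cdot>\<^sub>v (U *\<^sub>v unit_vec n j)"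
      proof -
        have "S *\<^sub>v (S *\<^sub>v (U *\<^sub>v unit_vec n j)) = (S * S) *\<^sub>v (U *\<^sub>v unit_vec n j)"
          by (rule massoc_vec[symmetric]) (use Sc U in auto)
        also have "\<dots> = complex_of_real (f j) \<cdot>\<^sub>v (U *\<^sub>v unit_vec n j)"
          unfolding S(2) using U j by (rule rep_col)
        finally show ?thesis .
      qed
    qed (use U f j in auto)
    have colR: "?R *\<^sub>v (U *\<^sub>v unit_vec n j) = complex_of_real (sqrt (f j)) \<cdot>\<^sub>v (U *\<^sub>v unit_vec n j)" if j: "j < n" for j
      using U j by (rule rep_col)
    have SU: "S * U = ?R * U"
    proof (rule eq_matI)
      fix i j assume ij: "i < dim_row (?R * U)" "j < dim_col (?R * U)"
      hence ij': "i < n" "j < n" using U by auto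
      have "(S * U) $$ (i,j) = (S *\<^sub>v (U *\<^sub>v unit_vec n j)) $ i"
        using Sc U ij' by (subst mult_unit_vec_index[symmetric, of _ n n]) (auto intro!: carrier_matI simp: massoc_vec)
      also have "\<dots> = (?R *\<^sub>v (U *\<^sub>v unit_vec n j)) $ i" using col colR ij' by simp
      also have "\<dots> = (?R * U) $$ (i,j)"
        using U ij' by (subst mult_unit_vec_index[symmetric, of _ n n]) (auto intro!: carrier_matI simp: massoc_vec)
      finally show "(S * U) $$ (i,j) = (?R * U) $$ (i,j)" .
    qed (use Sc U in auto)
    have "S = S * U * adj U" using Sc U by (simp add: massoc)
    also have "\<dots> = ?R * U * adj U" unfolding SU ..
    also have "\<dots> = ?R" using U by (simp add: massoc)
    finally show ?thesis .
  qed
  have "dim_row ?A = n" using U by simp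
  hence "msqrt ?A = (THE S. positive_op n S \<and> S * S = ?A)" unfolding msqrt_def by simp
  also have "\<dots> = ?R"
  proof (rule the_equality)
    show "positive_op n ?R \<and> ?R * ?R = ?A" using PR RR by blast
  next
    fix S assume "positive_op n S \<and> S * S = ?A"
    thus "S = ?R" using uniq by blast
  qed
  finally show ?thesis .
qed

lemma minv_unique: assumes "A \<in> carrier_mat n n" "B \<in> carrier_mat n n" "A * B = 1\<^sub>m n" "B * A = 1\<^sub>m n"
  shows "minv A = B"
proof -
  have uniq: "B' = B" if B': "B' \<in> carrier_mat n n" "A * B' = 1\<^sub>m n" "B' * A = 1\<^sub>m n" for B'
  proof -
    have "B' = B' * 1\<^sub>m n" using B'(1) by (rule right_mult_one_mat[symmetric])
    also have "\<dots> = B' * (A * B)" using assms(3) by simp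
    also have "\<dots> = (B' * A) * B" using assoc_mult_mat[OF B'(1) assms(1) assms(2)] by (rule sym)
    also have "\<dots> = B" unfolding B'(3) using assms(2) by (rule left_mult_one_mat)
    finally show ?thesis .
  qed
  have "minv A = (THE B. B \<in> carrier_mat n n \<and> A * B = 1\<^sub>m n \<and> B * A = 1\<^sub>m n)"
    unfolding minv_def using assms by simp
  also have "\<dots> = B"
  proof (rule the_equality)
    show "B \<in> carrier_mat n n \<and> A * B = 1\<^sub>m n \<and> B * A = 1\<^sub>m n" using assms by blast
  next
    fix B' assume "B' \<in> carrier_mat n n \<and> A * B' = 1\<^sub>m n \<and> B' * A = 1\<^sub>m n"
    thus "B' = B" using uniq by blast
  qed
  finally show ?thesis .
qed

lemma minv_rep: assumes U: "unitary n U" and f: "\<forall>i<n. f i \<noteq> 0"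
  shows "minv (rep n U f) = rep n U (\<lambda>i. 1 / f i)"
proof (rule minv_unique[of _ n])
  have "rep n U f * rep n U (\<lambda>i. 1 / f i) = rep n U (\<lambda>i. f i * (1 / f i))" using U by (rule rep_mult)
  also have "\<dots> = rep n U (\<lambda>_. 1)" unfolding rep_def using f by (intro arg_cong2[where f="(*)"] arg_cong[where f="\<lambda>D. U * D"] eq_matI) auto
  finally show "rep n U f * rep n U (\<lambda>i. 1 / f i) = 1\<^sub>m n" using U by (simp add: rep_one)
  have "rep n U (\<lambda>i. 1 / f i) * rep n U f = rep n U (\<lambda>i. (1 / f i) * f i)" using U by (rule rep_mult)
  also have "\<dots> = rep n U (\<lambda>_. 1)" unfolding rep_def using f by (intro arg_cong2[where f="(*)"] arg_cong[where f="\<lambda>D. U * D"] eq_matI) auto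
  finally show "rep n U (\<lambda>i. 1 / f i) * rep n U f = 1\<^sub>m n" using U by (simp add: rep_one)
qed (use U in \<open>auto simp: rep_carrier\<close>)

lemma minvsqrt_rep: assumes U: "unitary n U" and f: "\<forall>i<n. 0 < f i"
  shows "minvsqrt (rep n U f) = rep n U (\<lambda>i. 1 / sqrt (f i))"
proof -
  have "minvsqrt (rep n U f) = msqrt (rep n U (\<lambda>i. 1 / f i))"
  proof -
    have "\<forall>i<n. f i \<noteq> 0" using f by (metis less_irrefl)
    thus ?thesis unfolding minvsqrt_def using minv_rep[OF U, of f] by simp
  qed
  also have "\<dots> = rep n U (\<lambda>i. sqrt (1 / f i))" using U f by (intro msqrt_rep) auto
  also have "\<dots> = rep n U (\<lambda>i. 1 / sqrt (f i))" by (simp add: real_sqrt_divide)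
  finally show ?thesis .
qed


lemma cs_unit: assumes "dim_vec e = dim_vec y" "cinner e e = 1"
  shows "(cmod (cinner e y))\<^sup>2 \<le> Re (cinner y y)"
proof -
  define c where "c = cinner e y"
  define z where "z = y - c \<cdot>\<^sub>v e"
  have dz: "dim_vec z = dim_vec y" unfolding z_def using assms by simp
  have ye: "cinner y e = cnj c" unfolding c_def using cinner_commute[of e y] assms by simp
  have "cinner z z = cinner y y - c * cinner y e - cnj c * cinner e y + cnj c * c * cinner e e"
    unfolding z_def using assms
    by (simp add: cinner_minus_left cinner_minus_right cinner_smult_left cinner_smult_right algebra_simps)
  also have "\<dots> = cinner y y - cnj c * c" unfolding ye c_def[symmetric] using assms by simp
  finally have "Re (cinner z z) = Re (cinner y y) - (cmod c)\<^sup>2" by (simp add: cnj_mult_self)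
  thus ?thesis using Re_cinner_self_ge0[of z] unfolding c_def by simp
qed

definition Mop :: "nat \<Rightarrow> real \<Rightarrow> complex vec \<Rightarrow> complex mat" where
  "Mop n \<tau> e = 1\<^sub>m n - complex_of_real \<tau> \<cdot>\<^sub>m ketbra e e"

lemma Mop_dims[simp]: "dim_vec e = n \<Longrightarrow> dim_row (Mop n \<tau> e) = n" "dim_vec e = n \<Longrightarrow> dim_col (Mop n \<tau> e) = n"
  by (simp_all add: Mop_def)
lemma Mop_vec: "dim_vec e = n \<Longrightarrow> dim_vec v = n \<Longrightarrow> Mop n \<tau> e *\<^sub>v v = v - (complex_of_real \<tau> * cinner e v) \<cdot>\<^sub>v e"
  unfolding Mop_def by (rule H_mult_vec)
lemma adj_Mop: "dim_vec e = n \<Longrightarrow> adj (Mop n \<tau> e) = Mop n \<tau> e"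
  unfolding Mop_def by (subst adj_minus[of _ n n]) (auto simp: adj_smult adj_ketbra)

locale step_setup =
  fixes n :: nat and U :: "complex mat" and t :: "nat \<Rightarrow> real" and e :: "complex vec" and \<tau> :: real
  assumes U: "unitary n U" and t: "\<forall>i<n. 0 < t i"
    and e: "dim_vec e = n" "cinner e e = 1" and tau: "0 < \<tau>" "\<tau> < 1"
begin

definition "T = rep n U t"
definition "S = rep n U (\<lambda>i. sqrt (t i))"
definition "R = rep n U (\<lambda>i. 1 / sqrt (t i))"
definition "Ti = rep n U (\<lambda>i. 1 / t i)"
definition "M = Mop n \<tau> e"
definition "T' = S * M * S"

lemma dims[simp]: "dim_row T = n" "dim_col T = n" "dim_row S = n" "dim_col S = n"
  "dim_row R = n" "dim_col R = n" "dim_row Ti = n" "dim_col Ti = n" "dim_row M = n" "dim_col M = n"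
  "dim_row T' = n" "dim_col T' = n"
  unfolding T_def S_def R_def Ti_def M_def T'_def using U e by auto

lemma msqrtT: "msqrt T = S" unfolding T_def S_def using U t by (intro msqrt_rep) auto
lemma minvT: "minv T = Ti" unfolding T_def Ti_def using U t by (intro minv_rep) auto
lemma minvsqrtT: "minvsqrt T = R" unfolding T_def R_def using U t by (intro minvsqrt_rep) auto

lemma adjS: "adj S = S" unfolding S_def using U by (rule adj_rep)
lemma adjR: "adj R = R" unfolding R_def using U by (rule adj_rep)
lemma adjM: "adj M = M" unfolding M_def using e(1) by (rule adj_Mop)

lemma rep_mult_one: assumes "\<forall>i<n. f i * g i = 1" shows "rep n U f * rep n U g = 1\<^sub>m n"
proof -
  have "rep n U f * rep n U g = rep n U (\<lambda>i. f i * g i)" using U by (rule rep_mult)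
  also have "\<dots> = rep n U (\<lambda>_. 1)" by (rule rep_cong) (use assms in auto)
  finally show ?thesis using U by (simp add: rep_one)
qed

lemma SR: "S * R = 1\<^sub>m n" unfolding S_def R_def using t by (intro rep_mult_one) auto
lemma RS: "R * S = 1\<^sub>m n" unfolding S_def R_def using t by (intro rep_mult_one) auto
lemma SS: "S * S = T"
proof -
  have "S * S = rep n U (\<lambda>i. sqrt (t i) * sqrt (t i))" unfolding S_def using U by (rule rep_mult)
  also have "\<dots> = T" unfolding T_def by (rule rep_cong) (use t in \<open>auto simp: less_imp_le\<close>)
  finally show ?thesis .
qed
lemma RR: "R * R = Ti"
proof -
  have "R * R = rep n U (\<lambda>i. 1 / sqrt (t i) * (1 / sqrt (t i)))" unfolding R_def using U by (rule rep_mult)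
  also have "\<dots> = Ti" unfolding Ti_def by (rule rep_cong) (use t in \<open>auto simp: less_imp_le\<close>)
  finally show ?thesis .
qed

lemma mv_assoc: "dim_vec (v :: complex vec) = n \<Longrightarrow> dim_row A = n \<Longrightarrow> dim_col A = n \<Longrightarrow> dim_row B = n \<Longrightarrow> dim_col B = n \<Longrightarrow> A *\<^sub>v (B *\<^sub>v v) = (A * B) *\<^sub>v v"
  by (rule massoc_vec[symmetric]) auto

lemma one_vec: "dim_vec v = n \<Longrightarrow> 1\<^sub>m n *\<^sub>v v = (v :: complex vec)"
  by (intro one_mult_mat_vec carrier_vecI)
lemma SRv: "dim_vec v = n \<Longrightarrow> S *\<^sub>v (R *\<^sub>v v) = v"
  by (subst mv_assoc) (auto simp: SR one_vec)
lemma RSv: "dim_vec v = n \<Longrightarrow> R *\<^sub>v (S *\<^sub>v v) = v"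
  by (subst mv_assoc) (auto simp: RS one_vec)

lemma T'v: "dim_vec v = n \<Longrightarrow> T' *\<^sub>v v = S *\<^sub>v (M *\<^sub>v (S *\<^sub>v v))"
  unfolding T'_def by (simp add: massoc_vec)

lemma cinner_herm: assumes "adj A = A" "dim_row A = n" "dim_col A = n" "dim_vec x = n" "dim_vec y = n"
  shows "cinner x (A *\<^sub>v y) = cinner (A *\<^sub>v x) y"
  using cinner_adj[of A n n x y] assms by (auto intro!: carrier_matI carrier_vecI)

lemma quad: assumes x: "dim_vec x = n"
  shows "Re (cinner x (T' *\<^sub>v x)) = Re (cinner (S *\<^sub>v x) (S *\<^sub>v x)) - \<tau> * (cmod (cinner e (S *\<^sub>v x)))\<^sup>2"
proof -
  define y where "y = S *\<^sub>v x"
  have dy: "dim_vec y = n" unfolding y_def by simp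
  have "cinner x (T' *\<^sub>v x) = cinner y (M *\<^sub>v y)"
    unfolding T'v[OF x] y_def using x adjS by (subst cinner_herm[of S]) auto
  also have "\<dots> = cinner y y - complex_of_real \<tau> * cinner e y * cinner y e"
    unfolding M_def using e dy by (simp add: Mop_vec cinner_minus_right cinner_smult_right)
  also have "cinner y e = cnj (cinner e y)" using cinner_commute[of e y] e dy by simp
  also have "complex_of_real \<tau> * cinner e y * cnj (cinner e y) = complex_of_real (\<tau> * (cmod (cinner e y))\<^sup>2)"
    by (simp only: mult.assoc complex_norm_square[symmetric] of_real_mult)
  finally have "cinner x (T' *\<^sub>v x) = cinner y y - complex_of_real (\<tau> * (cmod (cinner e y))\<^sup>2)" .
  thus ?thesis unfolding y_def by simp
qed

lemma quadT: assumes "dim_vec x = n" shows "cinner x (T *\<^sub>v x) = cinner (S *\<^sub>v x) (S *\<^sub>v x)"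
proof -
  have "cinner x (T *\<^sub>v x) = cinner x (S *\<^sub>v (S *\<^sub>v x))" unfolding SS[symmetric] using assms by (simp add: massoc_vec)
  also have "\<dots> = cinner (S *\<^sub>v x) (S *\<^sub>v x)" by (rule cinner_herm[OF adjS]) (use assms in simp_all)
  finally show ?thesis .
qed

lemma mono: "dim_vec x = n \<Longrightarrow> Re (cinner x (T' *\<^sub>v x)) \<le> Re (cinner x (T *\<^sub>v x))"
  using quad quadT tau by simp

lemma T'_spos: "strictly_positive n T'"
  unfolding strictly_positive_def
proof (intro conjI ballI impI)
  show "T' \<in> carrier_mat n n" by (auto intro!: carrier_matI)
  have "adj T' = adj S * adj (S * M)" unfolding T'_def by (rule adj_mult[of _ n n _ n]) (auto intro!: carrier_matI)
  also have "adj (S * M) = adj M * adj S" by (rule adj_mult[of _ n n _ n]) (auto intro!: carrier_matI)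
  finally show "adj T' = T'" unfolding adjS adjM T'_def by (simp add: massoc)
next
  fix x :: "complex vec" assume x: "x \<in> carrier_vec n" "x \<noteq> 0\<^sub>v n"
  define y where "y = S *\<^sub>v x"
  have dy: "dim_vec y = n" unfolding y_def by simp
  have "y \<noteq> 0\<^sub>v n"
  proof
    assume "y = 0\<^sub>v n"
    hence "R *\<^sub>v y = 0\<^sub>v n" by simp
    thus False unfolding y_def using x RSv by simp
  qed
  hence "cinner y y \<noteq> 0" using cinner_self_eq_0[of y] dy by simp
  hence "(vnorm y)\<^sup>2 \<noteq> 0" by (simp only: cinner_self_vnorm of_real_eq_0_iff) simp
  moreover have "Re (cinner y y) = (vnorm y)\<^sup>2" by (simp only: cinner_self_vnorm Re_complex_of_real)
  ultimately have pos: "0 < Re (cinner y y)" by simp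
  have cs: "(cmod (cinner e y))\<^sup>2 \<le> Re (cinner y y)" using cs_unit e dy by simp
  have "Re (cinner x (T' *\<^sub>v x)) = Re (cinner y y) - \<tau> * (cmod (cinner e y))\<^sup>2"
    unfolding y_def using quad x by simp
  also have "\<dots> \<ge> (1 - \<tau>) * Re (cinner y y)" using cs tau by (simp add: algebra_simps mult_left_mono)
  finally show "0 < Re (cinner x (T' *\<^sub>v x))" using pos tau by (smt (verit) mult_pos_pos)
qed


lemma de[simp]: "dim_vec e = n" using e by simp
lemma ee[simp]: "cinner e e = 1" using e by simp

lemma dimv[simp]: "dim_vec v = n \<Longrightarrow> dim_vec (R *\<^sub>v v) = n" "dim_vec v = n \<Longrightarrow> dim_vec (S *\<^sub>v v) = n"
  "dim_vec v = n \<Longrightarrow> dim_vec (Ti *\<^sub>v v) = n" "dim_vec v = n \<Longrightarrow> dim_vec (M *\<^sub>v v) = n"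
  by simp_all

lemma minvT': "minv T' = Ti + complex_of_real (\<tau> / (1 - \<tau>)) \<cdot>\<^sub>m ketbra (R *\<^sub>v e) (R *\<^sub>v e)"
proof -
  define c where "c = \<tau> / (1 - \<tau>)"
  have c: "c * (1 - \<tau>) = \<tau>" unfolding c_def using tau by simp
  define X where "X = Ti + complex_of_real c \<cdot>\<^sub>m ketbra (R *\<^sub>v e) (R *\<^sub>v e)"
  have Xc: "X \<in> carrier_mat n n" unfolding X_def by (auto intro!: carrier_matI)
  have T'c: "T' \<in> carrier_mat n n" by (auto intro!: carrier_matI)
  have Xv: "X *\<^sub>v v = R *\<^sub>v (R *\<^sub>v v) + (complex_of_real c * cinner e (R *\<^sub>v v)) \<cdot>\<^sub>v (R *\<^sub>v e)"
    if v: "dim_vec v = n" for v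
  proof -
    have "X *\<^sub>v v = Ti *\<^sub>v v + (complex_of_real c \<cdot>\<^sub>m ketbra (R *\<^sub>v e) (R *\<^sub>v e)) *\<^sub>v v"
      unfolding X_def by (intro add_mult_distrib_mat_vec[of _ n n]) (auto intro!: carrier_matI carrier_vecI simp: v)
    also have "(complex_of_real c \<cdot>\<^sub>m ketbra (R *\<^sub>v e) (R *\<^sub>v e)) *\<^sub>v v
       = complex_of_real c \<cdot>\<^sub>v (cinner (R *\<^sub>v e) v \<cdot>\<^sub>v (R *\<^sub>v e))"
      by (subst smult_mat_mult_vec[of _ n n]) (auto intro!: carrier_matI carrier_vecI simp: ketbra_mult_vec v)
    also have "cinner (R *\<^sub>v e) v = cinner e (R *\<^sub>v v)"
      using v by (intro cinner_herm[OF adjR, symmetric]) simp_all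
    also have "Ti *\<^sub>v v = R *\<^sub>v (R *\<^sub>v v)" unfolding RR[symmetric] using v by (simp add: massoc_vec)
    finally show ?thesis by (simp add: smult_smult_assoc)
  qed
  have key: "T' *\<^sub>v (X *\<^sub>v v) = v" if v: "dim_vec v = n" for v
  proof -
    define \<beta> where "\<beta> = cinner e (R *\<^sub>v v)"
    define y where "y = R *\<^sub>v v + (complex_of_real c * \<beta>) \<cdot>\<^sub>v e"
    have dy: "dim_vec y = n" unfolding y_def using v by simp
    have "X *\<^sub>v v = R *\<^sub>v y"
    proof -
      have "R *\<^sub>v y = R *\<^sub>v (R *\<^sub>v v) + R *\<^sub>v ((complex_of_real c * \<beta>) \<cdot>\<^sub>v e)"
        unfolding y_def by (intro mult_add_distrib_mat_vec[of _ n n]) (auto intro!: carrier_matI carrier_vecI simp: v)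
      also have "R *\<^sub>v ((complex_of_real c * \<beta>) \<cdot>\<^sub>v e) = (complex_of_real c * \<beta>) \<cdot>\<^sub>v (R *\<^sub>v e)"
        by (simp add: mult_vec_smult)
      finally show ?thesis using Xv[OF v] unfolding \<beta>_def by simp
    qed
    hence "S *\<^sub>v (X *\<^sub>v v) = y" using SRv dy by simp
    moreover have "M *\<^sub>v y = R *\<^sub>v v"
    proof -
      have ey: "cinner e y = \<beta> + complex_of_real c * \<beta>"
        unfolding y_def \<beta>_def using v by (simp add: cinner_add_right cinner_smult_right)
      have "M *\<^sub>v y = y - (complex_of_real \<tau> * cinner e y) \<cdot>\<^sub>v e" unfolding M_def using de dy by (rule Mop_vec)
      also have "\<dots> = R *\<^sub>v v"
      proof (rule eq_vecI)
        fix i assume "i < dim_vec (R *\<^sub>v v)"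
        hence i: "i < n" using v by simp
        have "complex_of_real c * \<beta> - complex_of_real \<tau> * (\<beta> + complex_of_real c * \<beta>)
           = \<beta> * (complex_of_real (c * (1 - \<tau>)) - complex_of_real \<tau>)" by (simp add: algebra_simps)
        also have "\<dots> = 0" using c by simp
        finally have z: "complex_of_real c * \<beta> - complex_of_real \<tau> * (\<beta> + complex_of_real c * \<beta>) = 0" .
        have "(y - (complex_of_real \<tau> * cinner e y) \<cdot>\<^sub>v e) $ i
           = (R *\<^sub>v v) $ i + (complex_of_real c * \<beta> - complex_of_real \<tau> * (\<beta> + complex_of_real c * \<beta>)) * e $ i"
          unfolding ey unfolding y_def using i v by (simp add: algebra_simps)
        thus "(y - (complex_of_real \<tau> * cinner e y) \<cdot>\<^sub>v e) $ i = (R *\<^sub>v v) $ i" unfolding z by simp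
      qed (use v dy in simp)
      finally show ?thesis .
    qed
    ultimately show ?thesis using T'v[of "X *\<^sub>v v"] SRv[OF v] Xc by simp
  qed
  have TX: "T' * X = 1\<^sub>m n"
  proof (rule mat_eq_vecI[of _ n n])
    fix v :: "complex vec" assume "v \<in> carrier_vec n"
    hence v: "dim_vec v = n" by simp
    have "(T' * X) *\<^sub>v v = T' *\<^sub>v (X *\<^sub>v v)" using Xc v by (simp add: massoc_vec)
    also have "\<dots> = v" using key[OF v] .
    also have "\<dots> = 1\<^sub>m n *\<^sub>v v" using v by (simp add: one_vec)
    finally show "(T' * X) *\<^sub>v v = 1\<^sub>m n *\<^sub>v v" .
  qed (use Xc T'c in auto)
  have XT: "X * T' = 1\<^sub>m n" using mat_mult_left_right_inverse[OF T'c Xc TX] .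
  show ?thesis using minv_unique[OF T'c Xc TX XT] unfolding X_def c_def .
qed

lemma beta_step: "cinner e (minv T' *\<^sub>v e) - cinner e (minv T *\<^sub>v e)
   = complex_of_real (\<tau> / (1 - \<tau>) * (cmod (cinner e (R *\<^sub>v e)))\<^sup>2)"
proof -
  define c where "c = \<tau> / (1 - \<tau>)"
  define a where "a = cinner e (R *\<^sub>v e)"
  have Re_e: "cinner (R *\<^sub>v e) e = cnj a" unfolding a_def using cinner_commute[of e "R *\<^sub>v e"] by simp
  have "minv T' *\<^sub>v e = Ti *\<^sub>v e + (complex_of_real c \<cdot>\<^sub>m ketbra (R *\<^sub>v e) (R *\<^sub>v e)) *\<^sub>v e"
    unfolding minvT' c_def by (intro add_mult_distrib_mat_vec[of _ n n]) (auto intro!: carrier_matI carrier_vecI)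
  also have "(complex_of_real c \<cdot>\<^sub>m ketbra (R *\<^sub>v e) (R *\<^sub>v e)) *\<^sub>v e = complex_of_real c \<cdot>\<^sub>v (cnj a \<cdot>\<^sub>v (R *\<^sub>v e))"
    by (subst smult_mat_mult_vec[of _ n n]) (auto intro!: carrier_matI carrier_vecI simp: ketbra_mult_vec Re_e)
  finally have "cinner e (minv T' *\<^sub>v e) = cinner e (Ti *\<^sub>v e) + complex_of_real c * (cnj a * a)"
    by (simp add: cinner_add_right cinner_smult_right a_def)
  also have "cnj a * a = complex_of_real ((cmod a)\<^sup>2)" by (rule cnj_mult_self)
  finally show ?thesis unfolding minvT a_def c_def by simp
qed

lemma s_step: "mtrace (minv T') - mtrace (minv T) = complex_of_real (\<tau> / (1 - \<tau>)) * cinner e (minv T *\<^sub>v e)"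
proof -
  have "mtrace (minv T') = mtrace Ti + mtrace (complex_of_real (\<tau> / (1 - \<tau>)) \<cdot>\<^sub>m ketbra (R *\<^sub>v e) (R *\<^sub>v e))"
    unfolding minvT' by (intro mtrace_add[of _ n]) (auto intro!: carrier_matI)
  also have "mtrace (complex_of_real (\<tau> / (1 - \<tau>)) \<cdot>\<^sub>m ketbra (R *\<^sub>v e) (R *\<^sub>v e))
      = complex_of_real (\<tau> / (1 - \<tau>)) * cinner (R *\<^sub>v e) (R *\<^sub>v e)"
    by (subst mtrace_smult[of _ n]) (auto intro!: carrier_matI simp: mtrace_ketbra)
  also have "cinner (R *\<^sub>v e) (R *\<^sub>v e) = cinner e (R *\<^sub>v (R *\<^sub>v e))"
    by (intro cinner_herm[OF adjR, symmetric]) simp_all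
  also have "R *\<^sub>v (R *\<^sub>v e) = Ti *\<^sub>v e" unfolding RR[symmetric] by (simp add: massoc_vec)
  finally show ?thesis unfolding minvT by simp
qed

lemma sum_g: "(\<Sum>i<n. (cmod ((adj U *\<^sub>v e) $ i))\<^sup>2) = 1"
proof -
  have 1: "cinner (adj U *\<^sub>v e) (adj U *\<^sub>v e) = 1" using unitary_cinner[OF unitary_adj[OF U], of e e] U by simp
  have 2: "dim_vec (adj U *\<^sub>v e) = n" using U by simp
  have "complex_of_real (\<Sum>i<n. (cmod ((adj U *\<^sub>v e) $ i))\<^sup>2) = 1" using 1 unfolding cinner_self 2 .
  thus ?thesis by (metis of_real_eq_1_iff)
qed

lemma lower: assumes N: "\<forall>i<n. t i \<le> N" "0 < N"
  shows "1 / N \<le> (cmod (cinner e (R *\<^sub>v e)))\<^sup>2"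
proof -
  define g where "g = adj U *\<^sub>v e"
  define a where "a = (\<Sum>i<n. 1 / sqrt (t i) * (cmod (g $ i))\<^sup>2)"
  have "cinner e (R *\<^sub>v e) = complex_of_real a" unfolding R_def a_def g_def using U de by (rule cinner_rep)
  hence ca: "cmod (cinner e (R *\<^sub>v e)) = \<bar>a\<bar>" by simp
  have "1 / sqrt N = (\<Sum>i<n. 1 / sqrt N * (cmod (g $ i))\<^sup>2)"
    unfolding sum_distrib_left[symmetric] g_def sum_g by simp
  also have "\<dots> \<le> a" unfolding a_def
  proof (rule sum_mono)
    fix i assume "i \<in> {..<n}"
    hence "0 < t i" "t i \<le> N" using t N by auto
    hence "1 / sqrt N \<le> 1 / sqrt (t i)" by (simp add: frac_le)
    thus "1 / sqrt N * (cmod (g $ i))\<^sup>2 \<le> 1 / sqrt (t i) * (cmod (g $ i))\<^sup>2" by (metis mult_right_mono zero_le_power2)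
  qed
  finally have aN: "1 / sqrt N \<le> a" .
  have "0 < 1 / sqrt N" using N by simp
  hence "(1 / sqrt N)\<^sup>2 \<le> a\<^sup>2" using aN by (intro power_mono) auto
  hence "1 / N \<le> a\<^sup>2" using N by (simp add: power_divide)
  thus ?thesis unfolding ca by simp
qed
end


lemma mtrace_comm: assumes "(A :: complex mat) \<in> carrier_mat n m" "B \<in> carrier_mat m n"
  shows "mtrace (A * B) = mtrace (B * A)"
proof -
  have "mtrace (A * B) = (\<Sum>i<n. \<Sum>j<m. A $$ (i,j) * B $$ (j,i))"
    unfolding mtrace_def using assms by (simp add: scalar_prod_def atLeast0LessThan)
  also have "\<dots> = (\<Sum>j<m. \<Sum>i<n. B $$ (j,i) * A $$ (i,j))" by (subst sum.swap) (simp add: mult.commute)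
  also have "\<dots> = mtrace (B * A)"
    unfolding mtrace_def using assms by (simp add: scalar_prod_def atLeast0LessThan)
  finally show ?thesis .
qed

lemma mtrace_dg: "mtrace (dg n f) = complex_of_real (\<Sum>i<n. f i)"
  unfolding mtrace_def by (simp add: of_real_sum)

lemma mtrace_rep: assumes "unitary n U" shows "mtrace (rep n U f) = complex_of_real (\<Sum>i<n. f i)"
proof -
  have "mtrace (rep n U f) = mtrace ((U * dg n f) * adj U)" unfolding rep_def ..
  also have "\<dots> = mtrace (adj U * (U * dg n f))"
    using assms by (intro mtrace_comm[of _ n n]) (auto intro!: carrier_matI)
  also have "adj U * (U * dg n f) = dg n f" using assms by simp
  finally show ?thesis by (simp add: mtrace_dg)
qed

lemma eigen_rep: assumes U: "unitary n U"
  shows "{r. eigenvalue (rep n U f) (complex_of_real r)} = f ` {..<n}"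
proof (intro equalityI subsetI)
  fix r assume "r \<in> {r. eigenvalue (rep n U f) (complex_of_real r)}"
  then obtain x where x: "x \<in> carrier_vec n" "x \<noteq> 0\<^sub>v n" "rep n U f *\<^sub>v x = complex_of_real r \<cdot>\<^sub>v x"
    unfolding eigenvalue_def eigenvector_def using U by auto
  define y where "y = adj U *\<^sub>v x"
  have dy: "dim_vec y = n" unfolding y_def using U by simp
  have "y \<noteq> 0\<^sub>v n"
  proof
    assume "y = 0\<^sub>v n"
    hence "U *\<^sub>v y = 0\<^sub>v n" using U by simp
    thus False unfolding y_def using x U by simp
  qed
  then obtain j where j: "j < n" "y $ j \<noteq> 0" using dy by (metis eq_vecI index_zero_vec)
  have "U *\<^sub>v (dg n f *\<^sub>v y) = complex_of_real r \<cdot>\<^sub>v x"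
    using x U unfolding y_def by (simp add: rep_mult_vec)
  hence "adj U *\<^sub>v (U *\<^sub>v (dg n f *\<^sub>v y)) = adj U *\<^sub>v (complex_of_real r \<cdot>\<^sub>v x)" by simp
  hence "dg n f *\<^sub>v y = complex_of_real r \<cdot>\<^sub>v y"
    using U x dy unfolding y_def by (simp add: mult_vec_smult)
  hence "(dg n f *\<^sub>v y) $ j = (complex_of_real r \<cdot>\<^sub>v y) $ j" by simp
  hence "complex_of_real (f j) * y $ j = complex_of_real r * y $ j" using j dy by (simp add: dg_mult_vec carrier_vecI[OF dy])
  hence "f j = r" using j by simp
  thus "r \<in> f ` {..<n}" using j by blast
next
  fix r assume "r \<in> f ` {..<n}"
  then obtain i where i: "i < n" "r = f i" by blast
  have "U *\<^sub>v unit_vec n i \<noteq> 0\<^sub>v n"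
  proof
    assume "U *\<^sub>v unit_vec n i = 0\<^sub>v n"
    hence "cinner (U *\<^sub>v unit_vec n i) (U *\<^sub>v unit_vec n i) = 0" by simp
    thus False using unit_col_cinner[OF U i(1)] by simp
  qed
  hence "eigenvector (rep n U f) (U *\<^sub>v unit_vec n i) (complex_of_real r)"
    unfolding eigenvector_def using U i rep_col[OF U i(1)] by (auto intro!: carrier_vecI)
  thus "r \<in> {r. eigenvalue (rep n U f) (complex_of_real r)}" unfolding eigenvalue_def by blast
qed

lemma lambda_min_rep: assumes U: "unitary n U" and n: "0 < n"
  shows "\<exists>j<n. lambda_min (rep n U f) = f j \<and> (\<forall>i<n. f j \<le> f i)"
proof -
  have "lambda_min (rep n U f) = Min (f ` {..<n})" unfolding lambda_min_def eigen_rep[OF U] ..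
  moreover have "Min (f ` {..<n}) \<in> f ` {..<n}" using n by (intro Min_in) auto
  then obtain j where j: "j < n" "Min (f ` {..<n}) = f j" by auto
  moreover have "\<forall>i<n. Min (f ` {..<n}) \<le> f i" by (auto intro: Min_le)
  ultimately show ?thesis by metis
qed

lemma lambda_min_bound: assumes U: "unitary n U" and n: "0 < n" and t: "\<forall>i<n. 0 < t i"
  shows "lambda_min (rep n U t) \<le> real n / Re (mtrace (minv (rep n U t)))"
    and "0 < Re (mtrace (minv (rep n U t)))"
proof -
  have "minv (rep n U t) = rep n U (\<lambda>i. 1 / t i)" using U t by (intro minv_rep) auto
  hence tr: "Re (mtrace (minv (rep n U t))) = (\<Sum>i<n. 1 / t i)" using mtrace_rep[OF U] by simp
  obtain j where j: "j < n" "lambda_min (rep n U t) = t j" "\<forall>i<n. t j \<le> t i"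
    using lambda_min_rep[OF U n] by blast
  have tj: "0 < t j" using t j by simp
  have "0 < (\<Sum>i<n. 1 / t i)" using n t by (intro sum_pos) auto
  thus "0 < Re (mtrace (minv (rep n U t)))" using tr by simp
  have "(\<Sum>i<n. 1 / t i) \<le> (\<Sum>i<n. 1 / t j)"
    using j t tj by (intro sum_mono) (simp add: frac_le)
  hence "(\<Sum>i<n. 1 / t i) \<le> real n / t j" by simp
  hence "t j * (\<Sum>i<n. 1 / t i) \<le> real n" using tj by (simp add: field_simps)
  thus "lambda_min (rep n U t) \<le> real n / Re (mtrace (minv (rep n U t)))"
    unfolding tr j(2) using \<open>0 < (\<Sum>i<n. 1 / t i)\<close> by (simp add: field_simps)
qed


lemma le_one_plus_sq: "(v::real) \<le> 1 + v\<^sup>2"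
proof (cases "v \<le> 1")
  case True thus ?thesis using zero_le_power2[of v] by linarith
next
  case False
  hence "v * 1 \<le> v * v" by (intro mult_left_mono) auto
  thus ?thesis by (simp add: power2_eq_square)
qed

lemma vnorm_one: "cinner x x = 1 \<Longrightarrow> vnorm x = 1"
proof -
  assume "cinner x x = 1"
  hence "(vnorm x)\<^sup>2 = 1" unfolding cinner_self_vnorm by (metis of_real_eq_1_iff)
  moreover have "0 \<le> vnorm x" unfolding vnorm_def by (simp add: sum_nonneg)
  ultimately show ?thesis by (simp add: power2_eq_1_iff)
qed
lemma vnorm_one_cinner: "vnorm x = 1 \<Longrightarrow> cinner x x = 1"
  unfolding cinner_self_vnorm by simp

lemma opnorm_facts: assumes P: "positive_op n A"
  shows "\<forall>x. dim_vec x = n \<longrightarrow> cinner x x = 1 \<longrightarrow> Re (cinner x (A *\<^sub>v x)) \<le> opnorm A"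
proof (intro allI impI)
  fix x :: "complex vec" assume x: "dim_vec x = n" "cinner x x = 1"
  obtain V s where V: "unitary n V" "A = rep n V s" "\<forall>i<n. 0 \<le> s i" using pos_rep[OF P] by blast
  have dA: "dim_row A = n" "dim_col A = n" using V by auto
  define B where "B = 1 + (\<Sum>i<n. (s i)\<^sup>2)"
  have bound: "vnorm (A *\<^sub>v z) \<le> B" if z: "dim_vec z = n" "vnorm z = 1" for z
  proof -
    define h where "h = adj V *\<^sub>v z"
    have dh: "dim_vec h = n" unfolding h_def using V by simp
    have hh: "(\<Sum>i<n. (cmod (h $ i))\<^sup>2) = 1"
    proof -
      have "cinner h h = cinner z z" unfolding h_def using unitary_cinner[OF unitary_adj[OF V(1)], of z z] V z by simp
      also have "\<dots> = 1" using vnorm_one_cinner[OF z(2)] .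
      finally have "complex_of_real (\<Sum>i<n. (cmod (h $ i))\<^sup>2) = 1" unfolding cinner_self dh .
      thus ?thesis by (metis of_real_eq_1_iff)
    qed
    have hi: "(cmod (h $ i))\<^sup>2 \<le> 1" if "i < n" for i
      using member_le_sum[of i "{..<n}" "\<lambda>i. (cmod (h $ i))\<^sup>2"] that hh by simp
    have "A *\<^sub>v z = V *\<^sub>v (dg n s *\<^sub>v h)" unfolding V(2) h_def using V z by (simp add: rep_mult_vec)
    hence "cinner (A *\<^sub>v z) (A *\<^sub>v z) = cinner (dg n s *\<^sub>v h) (dg n s *\<^sub>v h)"
      using V dh by (simp add: unitary_cinner)
    also have "\<dots> = complex_of_real (\<Sum>i<n. (s i)\<^sup>2 * (cmod (h $ i))\<^sup>2)"
      unfolding cinner_self using dh by (simp add: dg_mult_vec carrier_vecI[OF dh] norm_mult power_mult_distrib)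
    finally have "(vnorm (A *\<^sub>v z))\<^sup>2 = (\<Sum>i<n. (s i)\<^sup>2 * (cmod (h $ i))\<^sup>2)"
      unfolding cinner_self_vnorm by (metis of_real_eq_iff)
    also have "\<dots> \<le> (\<Sum>i<n. (s i)\<^sup>2)"
    proof (rule sum_mono)
      fix i assume "i \<in> {..<n}"
      thus "(s i)\<^sup>2 * (cmod (h $ i))\<^sup>2 \<le> (s i)\<^sup>2" using hi[of i] by (intro mult_left_le) auto
    qed
    finally have "(vnorm (A *\<^sub>v z))\<^sup>2 \<le> B - 1" unfolding B_def by simp
    moreover have "vnorm (A *\<^sub>v z) \<le> 1 + (vnorm (A *\<^sub>v z))\<^sup>2" by (rule le_one_plus_sq)
    ultimately show ?thesis by simp
  qed
  have bdd: "bdd_above {vnorm (A *\<^sub>v z) | z. z \<in> carrier_vec (dim_col A) \<and> vnorm z = 1}"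
    by (rule bdd_aboveI[where M=B]) (use bound dA in auto)
  have dAx: "dim_vec (A *\<^sub>v x) = n" using dA by simp
  have "(cmod (cinner x (A *\<^sub>v x)))\<^sup>2 \<le> Re (cinner (A *\<^sub>v x) (A *\<^sub>v x))"
    using cs_unit[of x "A *\<^sub>v x"] x dAx by simp
  also have "\<dots> = (vnorm (A *\<^sub>v x))\<^sup>2" by (simp only: cinner_self_vnorm Re_complex_of_real)
  finally have "cmod (cinner x (A *\<^sub>v x)) \<le> vnorm (A *\<^sub>v x)"
    by (rule power2_le_imp_le) (simp add: vnorm_def sum_nonneg)
  moreover have "Re (cinner x (A *\<^sub>v x)) \<le> cmod (cinner x (A *\<^sub>v x))" by (rule complex_Re_le_cmod)
  moreover have "vnorm (A *\<^sub>v x) \<le> opnorm A"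
    unfolding opnorm_def using x dA vnorm_one[OF x(2)] by (intro cSup_upper[OF _ bdd]) (auto intro!: carrier_vecI)
  ultimately show "Re (cinner x (A *\<^sub>v x)) \<le> opnorm A" by linarith
qed


lemma dim_pos: "dim_vec e = n \<Longrightarrow> cinner e e = 1 \<Longrightarrow> 0 < n"
  by (cases n) (auto simp: cinner_def)

lemma step_facts:
  assumes A: "strictly_positive n A" and e: "dim_vec e = n" "cinner e e = 1" and tau: "0 < \<tau>" "\<tau> < 1"
  defines "A1 \<equiv> msqrt A * (1\<^sub>m (dim_vec e) - complex_of_real \<tau> \<cdot>\<^sub>m ketbra e e) * msqrt A"
  shows "strictly_positive n A1"
    "minv A1 = minv A + complex_of_real (\<tau> / (1 - \<tau>)) \<cdot>\<^sub>m ketbra (minvsqrt A *\<^sub>v e) (minvsqrt A *\<^sub>v e)"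
    "cinner e (minv A1 *\<^sub>v e) - cinner e (minv A *\<^sub>v e) = complex_of_real (\<tau> / (1 - \<tau>) * (cmod (cinner e (minvsqrt A *\<^sub>v e)))\<^sup>2)"
    "mtrace (minv A1) - mtrace (minv A) = complex_of_real (\<tau> / (1 - \<tau>)) * cinner e (minv A *\<^sub>v e)"
    "\<forall>x. dim_vec x = n \<longrightarrow> Re (cinner x (A1 *\<^sub>v x)) \<le> Re (cinner x (A *\<^sub>v x))"
    "\<forall>N. (\<forall>x. dim_vec x = n \<longrightarrow> cinner x x = 1 \<longrightarrow> Re (cinner x (A *\<^sub>v x)) \<le> N) \<longrightarrow> 1 / N \<le> (cmod (cinner e (minvsqrt A *\<^sub>v e)))\<^sup>2"
proof -
  obtain U t where U: "unitary n U" "A = rep n U t" "\<forall>i<n. 0 < t i" using spos_rep[OF A] by blast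
  interpret st: step_setup n U t e \<tau> by unfold_locales (use U e tau in auto)
  have TA: "st.T = A" unfolding st.T_def U(2) ..
  have A1: "A1 = st.T'" unfolding A1_def st.T'_def st.M_def Mop_def e(1) st.msqrtT[unfolded TA] ..
  show "strictly_positive n A1" unfolding A1 by (rule st.T'_spos)
  show "minv A1 = minv A + complex_of_real (\<tau> / (1 - \<tau>)) \<cdot>\<^sub>m ketbra (minvsqrt A *\<^sub>v e) (minvsqrt A *\<^sub>v e)"
    unfolding A1 st.minvT'  st.minvT[unfolded TA] st.minvsqrtT[unfolded TA] ..
  show "cinner e (minv A1 *\<^sub>v e) - cinner e (minv A *\<^sub>v e) = complex_of_real (\<tau> / (1 - \<tau>) * (cmod (cinner e (minvsqrt A *\<^sub>v e)))\<^sup>2)"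
    unfolding A1 TA[symmetric] st.minvsqrtT by (rule st.beta_step)
  show "mtrace (minv A1) - mtrace (minv A) = complex_of_real (\<tau> / (1 - \<tau>)) * cinner e (minv A *\<^sub>v e)"
    unfolding A1 TA[symmetric] by (rule st.s_step)
  show "\<forall>x. dim_vec x = n \<longrightarrow> Re (cinner x (A1 *\<^sub>v x)) \<le> Re (cinner x (A *\<^sub>v x))"
    unfolding A1 TA[symmetric] using st.mono by blast
  show "\<forall>N. (\<forall>x. dim_vec x = n \<longrightarrow> cinner x x = 1 \<longrightarrow> Re (cinner x (A *\<^sub>v x)) \<le> N) \<longrightarrow> 1 / N \<le> (cmod (cinner e (minvsqrt A *\<^sub>v e)))\<^sup>2"
  proof (intro allI impI)
    fix N assume N: "\<forall>x. dim_vec x = n \<longrightarrow> cinner x x = 1 \<longrightarrow> Re (cinner x (A *\<^sub>v x)) \<le> N"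
    have tN: "t i \<le> N" if i: "i < n" for i
    proof -
      have "complex_of_real (t i) = cinner (U *\<^sub>v unit_vec n i) (A *\<^sub>v (U *\<^sub>v unit_vec n i))"
        unfolding U(2) using rep_eigen_val[OF U(1) i] by simp
      hence "t i = Re (cinner (U *\<^sub>v unit_vec n i) (A *\<^sub>v (U *\<^sub>v unit_vec n i)))" by (metis Re_complex_of_real)
      also have "\<dots> \<le> N" using N unit_col_cinner[OF U(1) i] U(1) by simp
      finally show ?thesis .
    qed
    have n0: "0 < n" using dim_pos e by blast
    have "0 < N" using tN[OF n0] U(3) n0 by force
    thus "1 / N \<le> (cmod (cinner e (minvsqrt A *\<^sub>v e)))\<^sup>2"
      unfolding TA[symmetric] st.minvsqrtT using st.lower tN by blast
  qed
qed


lemma bounds_alg: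
  fixes B S :: "nat \<Rightarrow> real" and N q :: real
  assumes q: "0 \<le> q" and N: "0 < N" and hB: "\<And>k. B (Suc k) \<ge> B k + q / N" and hS: "\<And>k. S (Suc k) = S k + q * B k"
  shows "B k \<ge> B 0 + real k * q / N" and "S k \<ge> S 0 + q * real k * B 0 + q\<^sup>2 / (2 * N) * real k * (real k - 1)"
proof -
  show Bk: "B k \<ge> B 0 + real k * q / N" for k
  proof (induction k)
    case (Suc k)
    have "real (Suc k) * q / N = real k * q / N + q / N" by (simp add: add_divide_distrib distrib_right)
    thus ?case using Suc hB[of k] by linarith
  qed simp
  define c where "c = q\<^sup>2 / (2 * N)"
  have c2: "2 * c * real k = q * (real k * q / N)" for k
    unfolding c_def using N by (simp add: power2_eq_square)
  show "S k \<ge> S 0 + q * real k * B 0 + q\<^sup>2 / (2 * N) * real k * (real k - 1)"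
    unfolding c_def[symmetric]
  proof (induction k)
    case (Suc k)
    have m: "q * B k \<ge> q * (B 0 + real k * q / N)" using Bk[of k] q by (rule mult_left_mono)
    have e1: "c * real (Suc k) * (real (Suc k) - 1) = c * real k * (real k - 1) + 2 * c * real k"
      by (simp add: algebra_simps)
    have e2: "q * real (Suc k) * B 0 = q * real k * B 0 + q * B 0" by (simp add: algebra_simps)
    have e3: "q * (B 0 + real k * q / N) = q * B 0 + q * (real k * q / N)" by (simp add: algebra_simps)
    have "S 0 + q * real (Suc k) * B 0 + c * real (Suc k) * (real (Suc k) - 1)
        = (S 0 + q * real k * B 0 + c * real k * (real k - 1)) + q * (B 0 + real k * q / N)"
      unfolding e1 e2 e3 c2[symmetric] by (simp add: algebra_simps)
    also have "\<dots> \<le> S k + q * B k" using Suc.IH m by (rule add_mono)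
    also have "\<dots> = S (Suc k)" using hS[of k] by simp
    finally show ?case .
  qed simp
qed

lemma final_alg:
  fixes a b d K S :: real
  assumes a: "0 < a" and b: "0 < b" and K: "1 \<le> K" and d: "0 \<le> d" and S: "a + b * K * (K - 1) \<le> S"
  shows "d / S \<le> d * (1 / a + 2 / b) / K\<^sup>2"
proof -
  have KK: "0 \<le> K * (K - 1)" using K by simp
  have bKK: "0 \<le> b * K * (K - 1)" using b KK by (simp add: mult.assoc)
  have Spos: "0 < S" using S a bKK by linarith
  have "(1 / a + 2 / b) * (a + b * K * (K - 1)) = 1 + b * K * (K - 1) / a + 2 * a / b + 2 * K * (K - 1)"
    using a b by (simp add: field_simps)
  moreover have "0 \<le> b * K * (K - 1) / a" using a bKK by simp
  moreover have "0 \<le> 2 * a / b" using a b by simp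
  moreover have "K\<^sup>2 \<le> 1 + 2 * K * (K - 1)" using zero_le_power2[of "K - 1"] by (simp add: power2_eq_square algebra_simps)
  ultimately have "K\<^sup>2 \<le> (1 / a + 2 / b) * (a + b * K * (K - 1))" by linarith
  also have "\<dots> \<le> (1 / a + 2 / b) * S" using S a b by (intro mult_left_mono) auto
  finally have "K\<^sup>2 \<le> (1 / a + 2 / b) * S" .
  hence "d * K\<^sup>2 \<le> d * ((1 / a + 2 / b) * S)" using d by (rule mult_left_mono)
  hence "d * K\<^sup>2 \<le> (d * (1 / a + 2 / b)) * S" by (simp add: mult.assoc)
  moreover have "0 < K\<^sup>2" using K by simp
  ultimately show ?thesis using Spos by (simp add: divide_le_eq le_divide_eq mult.commute mult.left_commute)
qed


lemma seq_facts:
  fixes d :: nat and e :: "complex vec" and \<tau> :: real and T0 :: "complex mat"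
  assumes e: "dim_vec e = d" "cinner e e = 1" and tau: "0 < \<tau>" "\<tau> < 1" and T0: "strictly_positive d T0"
  shows "\<forall>k. strictly_positive d (Tseq \<tau> e T0 k)"
    "\<forall>k. minv (Tseq \<tau> e T0 (Suc k)) = minv (Tseq \<tau> e T0 k) + complex_of_real (\<tau> / (1 - \<tau>)) \<cdot>\<^sub>m
        ketbra (minvsqrt (Tseq \<tau> e T0 k) *\<^sub>v e) (minvsqrt (Tseq \<tau> e T0 k) *\<^sub>v e)"
    "\<forall>k. cinner e (minv (Tseq \<tau> e T0 (Suc k)) *\<^sub>v e) - cinner e (minv (Tseq \<tau> e T0 k) *\<^sub>v e)
        = complex_of_real (\<tau> / (1 - \<tau>) * (cmod (cinner e (minvsqrt (Tseq \<tau> e T0 k) *\<^sub>v e)))\<^sup>2)"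
    "\<forall>k. mtrace (minv (Tseq \<tau> e T0 (Suc k))) - mtrace (minv (Tseq \<tau> e T0 k))
        = complex_of_real (\<tau> / (1 - \<tau>)) * cinner e (minv (Tseq \<tau> e T0 k) *\<^sub>v e)"
    "\<forall>k. 1 / opnorm T0 \<le> (cmod (cinner e (minvsqrt (Tseq \<tau> e T0 k) *\<^sub>v e)))\<^sup>2"
    "0 < opnorm T0"
proof -
  let ?T = "Tseq \<tau> e T0"
  have inv: "strictly_positive d (?T k) \<and> (\<forall>x. dim_vec x = d \<longrightarrow> Re (cinner x (?T k *\<^sub>v x)) \<le> Re (cinner x (T0 *\<^sub>v x)))" for k
  proof (induction k)
    case 0 thus ?case using T0 by simp
  next
    case (Suc k)
    have sp: "strictly_positive d (?T k)" using Suc by blast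
    have eq: "?T (Suc k) = msqrt (?T k) * (1\<^sub>m (dim_vec e) - complex_of_real \<tau> \<cdot>\<^sub>m ketbra e e) * msqrt (?T k)" by simp
    show ?case unfolding eq using step_facts(1,5)[OF sp e tau] Suc by force
  qed
  show "\<forall>k. strictly_positive d (?T k)" using inv by blast
  show "\<forall>k. minv (?T (Suc k)) = minv (?T k) + complex_of_real (\<tau> / (1 - \<tau>)) \<cdot>\<^sub>m
        ketbra (minvsqrt (?T k) *\<^sub>v e) (minvsqrt (?T k) *\<^sub>v e)"
    using step_facts(2)[OF _ e tau] inv by simp
  show "\<forall>k. cinner e (minv (?T (Suc k)) *\<^sub>v e) - cinner e (minv (?T k) *\<^sub>v e)
        = complex_of_real (\<tau> / (1 - \<tau>) * (cmod (cinner e (minvsqrt (?T k) *\<^sub>v e)))\<^sup>2)"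
    using step_facts(3)[OF _ e tau] inv by simp
  show "\<forall>k. mtrace (minv (?T (Suc k))) - mtrace (minv (?T k))
        = complex_of_real (\<tau> / (1 - \<tau>)) * cinner e (minv (?T k) *\<^sub>v e)"
    using step_facts(4)[OF _ e tau] inv by simp
  have opn: "\<forall>x. dim_vec x = d \<longrightarrow> cinner x x = 1 \<longrightarrow> Re (cinner x (T0 *\<^sub>v x)) \<le> opnorm T0"
    using opnorm_facts[OF spos_pos[OF T0]] .
  show "\<forall>k. 1 / opnorm T0 \<le> (cmod (cinner e (minvsqrt (?T k) *\<^sub>v e)))\<^sup>2"
  proof
    fix k
    have "\<forall>x. dim_vec x = d \<longrightarrow> cinner x x = 1 \<longrightarrow> Re (cinner x (?T k *\<^sub>v x)) \<le> opnorm T0"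
      using inv[of k] opn by force
    thus "1 / opnorm T0 \<le> (cmod (cinner e (minvsqrt (?T k) *\<^sub>v e)))\<^sup>2"
      using step_facts(6)[OF _ e tau] inv by blast
  qed
  have "e \<noteq> 0\<^sub>v d"
  proof
    assume "e = 0\<^sub>v d"
    hence "cinner e e = 0" using cinner_self_eq_0[of e] e(1) by simp
    thus False using e(2) by simp
  qed
  hence "0 < Re (cinner e (T0 *\<^sub>v e))" using T0 e unfolding strictly_positive_def by (auto intro!: carrier_vecI)
  thus "0 < opnorm T0" using opn e by force
qed


lemma bounds_general:
  fixes d :: nat and e :: "complex vec" and \<tau> :: real and T0 :: "complex mat"
  assumes e: "dim_vec e = d" "cinner e e = 1" and tau: "0 < \<tau>" "\<tau> < 1" and T0: "strictly_positive d T0"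
  defines "B \<equiv> \<lambda>k. Re (cinner e (minv (Tseq \<tau> e T0 k) *\<^sub>v e))"
  defines "S \<equiv> \<lambda>k. Re (mtrace (minv (Tseq \<tau> e T0 k)))"
  shows "B k \<ge> B 0 + real k * \<tau> / ((1 - \<tau>) * opnorm T0)"
    and "S k \<ge> S 0 + \<tau> / (1 - \<tau>) * real k * B 0
          + \<tau>\<^sup>2 / (2 * (1 - \<tau>)\<^sup>2 * opnorm T0) * real k * (real k - 1)"
proof -
  define q where "q = \<tau> / (1 - \<tau>)"
  define N where "N = opnorm T0"
  note sf = seq_facts[OF e tau T0]
  have q: "0 \<le> q" unfolding q_def using tau by simp
  have N: "0 < N" unfolding N_def using sf(6) .
  have hB: "B (Suc k) \<ge> B k + q / N" for k
  proof -
    have "B (Suc k) - B k = q * (cmod (cinner e (minvsqrt (Tseq \<tau> e T0 k) *\<^sub>v e)))\<^sup>2"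
      unfolding B_def q_def using arg_cong[OF sf(3)[rule_format, of k], of Re] by simp
    moreover have "q * (1 / N) \<le> q * (cmod (cinner e (minvsqrt (Tseq \<tau> e T0 k) *\<^sub>v e)))\<^sup>2"
      using sf(5) q unfolding N_def by (intro mult_left_mono) auto
    ultimately show ?thesis by simp
  qed
  have hS: "S (Suc k) = S k + q * B k" for k
  proof -
    have "S (Suc k) - S k = q * B k"
      unfolding S_def B_def q_def using arg_cong[OF sf(4)[rule_format, of k], of Re] by simp
    thus ?thesis by simp
  qed
  note ba = bounds_alg[of q N B S, OF q N hB hS]
  have eq1: "real k * q / N = real k * \<tau> / ((1 - \<tau>) * opnorm T0)" unfolding q_def N_def by simp
  have eq2: "q\<^sup>2 / (2 * N) = \<tau>\<^sup>2 / (2 * (1 - \<tau>)\<^sup>2 * opnorm T0)" unfolding q_def N_def by (simp add: power_divide)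
  show "B k \<ge> B 0 + real k * \<tau> / ((1 - \<tau>) * opnorm T0)" using ba(1)[of k] unfolding eq1 .
  show "S k \<ge> S 0 + \<tau> / (1 - \<tau>) * real k * B 0
          + \<tau>\<^sup>2 / (2 * (1 - \<tau>)\<^sup>2 * opnorm T0) * real k * (real k - 1)"
    using ba(2)[of k] unfolding eq2 unfolding q_def .
qed

lemma C_part:
  fixes d :: nat and \<tau> :: real and T0 :: "complex mat"
  assumes tau: "0 < \<tau>" "\<tau> < 1" and T0: "strictly_positive d T0"
  shows "\<exists>C > 0. \<forall>e' \<in> carrier_vec d. vnorm e' = 1 \<longrightarrow>
        (\<forall>k \<ge> 1.
           lambda_min (Tseq \<tau> e' T0 k) \<le> real d / Re (mtrace (minv (Tseq \<tau> e' T0 k)))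
         \<and> real d / Re (mtrace (minv (Tseq \<tau> e' T0 k))) \<le> C / (real k)\<^sup>2)"
proof (cases "d = 0")
  case True
  have "\<not> (e' \<in> carrier_vec d \<and> vnorm e' = 1)" for e'
    using True by (auto simp: vnorm_def)
  thus ?thesis by (intro exI[of _ 1]) auto
next
  case False
  hence d0: "0 < d" by simp
  obtain V t0 where V: "unitary d V" "T0 = rep d V t0" "\<forall>i<d. 0 < t0 i" using spos_rep[OF T0] by blast
  define a where "a = Re (mtrace (minv T0))"
  have a: "0 < a" unfolding a_def V(2) using lambda_min_bound(2)[OF V(1) d0 V(3)] .
  have minvT0: "minv T0 = rep d V (\<lambda>i. 1 / t0 i)" unfolding V(2) using V by (intro minv_rep) auto
  have posinv: "positive_op d (minv T0)" unfolding minvT0 using V by (intro rep_pos) (auto simp: less_imp_le)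
  define b where "b = \<tau>\<^sup>2 / (2 * (1 - \<tau>)\<^sup>2 * opnorm T0)"
  define C where "C = real d * (1 / a + 2 / b)"
  have opn: "0 < opnorm T0"
  proof -
    have "cinner (V *\<^sub>v unit_vec d 0) (V *\<^sub>v unit_vec d 0) = 1" using unit_col_cinner[OF V(1) d0] .
    moreover have "dim_vec (V *\<^sub>v unit_vec d 0) = d" using V by simp
    ultimately show ?thesis using seq_facts(6)[OF _ _ tau T0] by blast
  qed
  have b: "0 < b" unfolding b_def using tau opn by simp
  have C: "0 < C" unfolding C_def using a b d0 by (intro mult_pos_pos add_pos_pos) auto
  show ?thesis
  proof (intro exI[of _ C] conjI ballI impI allI C)
    fix e' :: "complex vec" and k :: nat
    assume e': "e' \<in> carrier_vec d" "vnorm e' = 1" and k: "1 \<le> k"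
    have de: "dim_vec e' = d" using e' by simp
    have ee: "cinner e' e' = 1" using vnorm_one_cinner[OF e'(2)] .
    have sp: "strictly_positive d (Tseq \<tau> e' T0 k)" using seq_facts(1)[OF de ee tau T0] by blast
    obtain U t where U: "unitary d U" "Tseq \<tau> e' T0 k = rep d U t" "\<forall>i<d. 0 < t i" using spos_rep[OF sp] by blast
    show "lambda_min (Tseq \<tau> e' T0 k) \<le> real d / Re (mtrace (minv (Tseq \<tau> e' T0 k)))"
      unfolding U(2) using lambda_min_bound(1)[OF U(1) d0 U(3)] .
    have B0: "0 \<le> Re (cinner e' (minv (Tseq \<tau> e' T0 0) *\<^sub>v e'))"
      using posinv e' unfolding positive_op_def by simp
    have "Re (mtrace (minv (Tseq \<tau> e' T0 k))) \<ge> Re (mtrace (minv (Tseq \<tau> e' T0 0)))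
       + \<tau> / (1 - \<tau>) * real k * Re (cinner e' (minv (Tseq \<tau> e' T0 0) *\<^sub>v e'))
       + \<tau>\<^sup>2 / (2 * (1 - \<tau>)\<^sup>2 * opnorm T0) * real k * (real k - 1)"
      using bounds_general(2)[OF de ee tau T0, of k] by simp
    moreover have "0 \<le> \<tau> / (1 - \<tau>) * real k * Re (cinner e' (minv (Tseq \<tau> e' T0 0) *\<^sub>v e'))"
      using tau B0 by simp
    ultimately have "a + b * real k * (real k - 1) \<le> Re (mtrace (minv (Tseq \<tau> e' T0 k)))"
      unfolding a_def b_def by simp
    thus "real d / Re (mtrace (minv (Tseq \<tau> e' T0 k))) \<le> C / (real k)\<^sup>2"
      unfolding C_def using final_alg[OF a b _ _] k by simp
  qed
qed

theorem proposition3p4: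
  fixes d :: nat and e :: "complex vec" and \<tau> :: real and T0 :: "complex mat"
  defines "\<rho> \<equiv> 1 - \<tau>"
  defines "T \<equiv> Tseq \<tau> e T0"
  defines "\<beta> \<equiv> \<lambda>k. cinner e (minv (T k) *\<^sub>v e)"
  defines "s \<equiv> \<lambda>k. mtrace (minv (T k))"
  assumes e: "e \<in> carrier_vec d" "vnorm e = 1"
    and tau: "0 < \<tau>" "\<tau> < 1"
    and T0: "strictly_positive d T0"
  shows
    "(\<forall>k. strictly_positive d (T k))
   \<and> (\<forall>k. minv (T (Suc k)) = minv (T k) +
          complex_of_real (\<tau> / \<rho>) \<cdot>\<^sub>m
            ketbra (minvsqrt (T k) *\<^sub>v e) (minvsqrt (T k) *\<^sub>v e))
   \<and> (\<forall>k. \<beta> (Suc k) - \<beta> k =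
          complex_of_real (\<tau> / \<rho> * (cmod (cinner e (minvsqrt (T k) *\<^sub>v e)))\<^sup>2))
   \<and> (\<forall>k. s (Suc k) - s k = complex_of_real (\<tau> / \<rho>) * \<beta> k)
   \<and> (\<forall>k. Re (\<beta> k) \<ge> Re (\<beta> 0) + real k * \<tau> / (\<rho> * opnorm T0))
   \<and> (\<forall>k. Re (s k) \<ge> Re (s 0) + \<tau> / \<rho> * real k * Re (\<beta> 0)
          + \<tau>\<^sup>2 / (2 * \<rho>\<^sup>2 * opnorm T0) * real k * (real k - 1))
   \<and> (\<exists>C > 0. \<forall>e' \<in> carrier_vec d. vnorm e' = 1 \<longrightarrow>
        (\<forall>k \<ge> 1.
           lambda_min (Tseq \<tau> e' T0 k) \<le> real d / Re (mtrace (minv (Tseq \<tau> e' T0 k)))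
         \<and> real d / Re (mtrace (minv (Tseq \<tau> e' T0 k))) \<le> C / (real k)\<^sup>2))"
proof -
  have de: "dim_vec e = d" using e by simp
  have ee: "cinner e e = 1" using vnorm_one_cinner[OF e(2)] .
  note sf = seq_facts[OF de ee tau T0]
  note bg = bounds_general[OF de ee tau T0]
  show ?thesis
    unfolding \<rho>_def T_def \<beta>_def s_def
    using sf(1-4) bg C_part[OF tau T0] by simp
qed


end
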